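(* Let $T>0$, $0<\eta<T$, $0<\alpha<\frac{1}{\eta}$, let $f\in C([0,\infty),[0,\infty))$, and let $a\in C([0,T],[0,\infty))$ with $a(t_0)>0$ for some $t_0\in[0,T]$. Consider the boundary value problem \[ u''(t)+a(t)f(u(t))=0,\quad 0<t<T,\qquad u'(0)=0,\quad u(T)=\alpha\int_0^{\eta}u(s)\,ds. \tag{P} \] Assume that $f_0=f_\infty=0$, and that there exist constants $\rho_2>0$ and $M_2\in[\Lambda_2,\infty)$ such that $f(u)\ge M_2\rho_2$ for all $u\in[\gamma\rho_2,\rho_2]$. Then (P) has at least two positive solutions $u_1,u_2$ with \[ 0<\|u_1\|<\rho_2<\|u_2\|. \]
   Context: $f_0=\lim_{u\to0^+}\frac{f(u)}{u}$, $f_\infty=\lim_{u\to\infty}\frac{f(u)}{u}$. $\|u\|=\max_{t\in[0,T]}|u(t)|$. $\gamma=\dfrac{\alpha\eta(T-\eta)}{T-\alpha\eta^2}$ and $\Lambda_2=\dfrac{1-\alpha\eta}{\gamma\left(\int_\eta^T (T-s)a(s)\,ds+\frac12\int_0^\eta\left[2(T-\eta)+\alpha(\eta^2-s^2)\right]a(s)\,ds\right)}$. A positive solution of (P) is a function $u\in C^2([0,T])$ satisfying (P) with $u(t)\ge0$ on $[0,T]$ and $u$ not identically zero. *)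

theory Defs
  imports "HOL-Analysis.Analysis"
begin

definition C2_with :: "real \<Rightarrow> (real \<Rightarrow> real) \<Rightarrow> (real \<Rightarrow> real) \<Rightarrow> (real \<Rightarrow> real) \<Rightarrow> bool" where
  "C2_with T u u1 u2 \<longleftrightarrow>
     (\<forall>t\<in>{0..T}. (u has_real_derivative u1 t) (at t within {0..T})) \<and>
     (\<forall>t\<in>{0..T}. (u1 has_real_derivative u2 t) (at t within {0..T})) \<and>
     continuous_on {0..T} u2"

definition pos_solution ::
  "real \<Rightarrow> real \<Rightarrow> real \<Rightarrow> (real \<Rightarrow> real) \<Rightarrow> (real \<Rightarrow> real) \<Rightarrow> (real \<Rightarrow> real) \<Rightarrow> bool" where
  "pos_solution T \<eta> \<alpha> a f u \<longleftrightarrow>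
     (\<exists>u1 u2. C2_with T u u1 u2 \<and>
        (\<forall>t\<in>{0<..<T}. u2 t + a t * f (u t) = 0) \<and>
        u1 0 = 0 \<and>
        u T = \<alpha> * integral {0..\<eta>} u) \<and>
     (\<forall>t\<in>{0..T}. u t \<ge> 0) \<and> (\<exists>t\<in>{0..T}. u t \<noteq> 0)"

definition supnorm :: "real \<Rightarrow> (real \<Rightarrow> real) \<Rightarrow> real" where
  "supnorm T u = (SUP t\<in>{0..T}. \<bar>u t\<bar>)"

definition gam :: "real \<Rightarrow> real \<Rightarrow> real \<Rightarrow> real" where
  "gam T \<eta> \<alpha> = \<alpha> * \<eta> * (T - \<eta>) / (T - \<alpha> * \<eta>^2)"

definition Lambda2 :: "real \<Rightarrow> real \<Rightarrow> real \<Rightarrow> (real \<Rightarrow> real) \<Rightarrow> real" where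
  "Lambda2 T \<eta> \<alpha> a = (1 - \<alpha> * \<eta>) /
     (gam T \<eta> \<alpha> * (integral {\<eta>..T} (\<lambda>s. (T - s) * a s)
       + 1/2 * integral {0..\<eta>} (\<lambda>s. (2 * (T - \<eta>) + \<alpha> * (\<eta>^2 - s^2)) * a s)))"

end

theory Submission
  imports Defs "HOL-Library.Diagonal_Subsequence"
begin

definition W :: "(real \<Rightarrow> real) \<Rightarrow> real \<Rightarrow> real" where
  "W y t = integral {0..t} (\<lambda>s. (t - s) * y s)"

lemma cont_sub: "continuous_on {0..(T::real)} y \<Longrightarrow> 0 \<le> a \<Longrightarrow> b \<le> T \<Longrightarrow> continuous_on {a..b} y"
  by (rule continuous_on_subset) auto

lemma W_alt:
  assumes "continuous_on {0..T} y" "0 \<le> t" "t \<le> T"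
  shows "W y t = t * integral {0..t} y - integral {0..t} (\<lambda>s. s * y s)"
proof -
  have c: "continuous_on {0..t} y" using assms cont_sub by blast
  have i1: "(\<lambda>s. t * y s) integrable_on {0..t}" using c
    by (auto intro!: integrable_continuous_real continuous_intros)
  have i2: "(\<lambda>s. s * y s) integrable_on {0..t}" using c
    by (auto intro!: integrable_continuous_real continuous_intros)
  have "W y t = integral {0..t} (\<lambda>s. t * y s - s * y s)" unfolding W_def
    by (simp add: algebra_simps)
  also have "\<dots> = integral {0..t} (\<lambda>s. t * y s) - integral {0..t} (\<lambda>s. s * y s)"
    by (rule integral_diff[OF i1 i2])
  finally show ?thesis by (simp add: integral_mult_right)
qed

lemma W_deriv:
  assumes "continuous_on {0..T} y" "t \<in> {0..T}"
  shows "(W y has_real_derivative integral {0..t} y) (at t within {0..T})"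
proof -
  have d0: "((\<lambda>x. integral {0..x} y) has_real_derivative y t) (at t within {0..T})"
    by (rule integral_has_real_derivative[OF assms])
  have c1: "continuous_on {0..T} (\<lambda>s. s * y s)" using assms(1) by (intro continuous_intros)
  have d1: "((\<lambda>x. integral {0..x} (\<lambda>s. s * y s)) has_real_derivative t * y t) (at t within {0..T})"
    using integral_has_real_derivative[OF c1 assms(2)] by simp
  have d: "((\<lambda>x. x * integral {0..x} y - integral {0..x} (\<lambda>s. s * y s)) has_real_derivative
        integral {0..t} y) (at t within {0..T})"
    by (rule derivative_eq_intros d0 d1 | simp)+
  show ?thesis
    by (rule has_field_derivative_transform_within[OF d zero_less_one assms(2)])
       (auto simp: W_alt[OF assms(1)])
qed

lemma W_zero[simp]: "W y 0 = 0" by (simp add: W_def)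

lemma integral_bounds:
  fixes y :: "real \<Rightarrow> real"
  assumes "continuous_on {0..T} y" "\<forall>s\<in>{0..T}. 0 \<le> y s \<and> y s \<le> B" "0 \<le> x" "x \<le> T"
  shows "0 \<le> integral {0..x} y \<and> integral {0..x} y \<le> T * B"
proof -
  have c: "continuous_on {0..x} y" using assms cont_sub by blast
  have i: "y integrable_on {0..x}" by (rule integrable_continuous_real[OF c])
  have "0 \<le> integral {0..x} y" using assms by (intro integral_nonneg[OF i]) auto
  moreover have "integral {0..x} y \<le> integral {0..x} (\<lambda>s. B)"
    using assms by (intro integral_le[OF i]) auto
  moreover have "B \<ge> 0" using assms(2,3,4) by fastforce
  moreover have "integral {0..x} (\<lambda>s. B) = x * B" using assms by (simp add: integral_const_real)
  moreover have "x * B \<le> T * B" using assms \<open>B \<ge> 0\<close> by (simp add: mult_right_mono)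
  ultimately show ?thesis by linarith
qed

lemma W_mono_lip:
  assumes "continuous_on {0..T} y" "\<forall>s\<in>{0..T}. 0 \<le> y s \<and> y s \<le> B" "0 \<le> t1" "t1 \<le> t2" "t2 \<le> T"
  shows "0 \<le> W y t2 - W y t1 \<and> W y t2 - W y t1 \<le> T * B * (t2 - t1)"
proof -
  have "\<And>x. t1 \<le> x \<Longrightarrow> x \<le> t2 \<Longrightarrow> (W y has_derivative (\<lambda>h. integral {0..x} y * h)) (at x within {t1..t2})"
  proof -
    fix x assume "t1 \<le> x" "x \<le> t2"
    then have "x \<in> {0..T}" using assms by auto
    from has_field_derivative_subset[OF W_deriv[OF assms(1) this], of "{t1..t2}"]
    show "(W y has_derivative (\<lambda>h. integral {0..x} y * h)) (at x within {t1..t2})"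
      using assms by (auto simp: has_field_derivative_def)
  qed
  from mvt_very_simple[OF assms(4) this] obtain x where x: "x \<in> {t1..t2}"
    "W y t2 - W y t1 = integral {0..x} y * (t2 - t1)" by blast
  have "0 \<le> integral {0..x} y \<and> integral {0..x} y \<le> T * B"
    using integral_bounds[OF assms(1,2)] x assms by auto
  then show ?thesis using x assms by (auto intro: mult_nonneg_nonneg mult_right_mono)
qed

lemma W_integral:
  assumes "continuous_on {0..T} y" "0 \<le> e" "e \<le> T"
  shows "(W y has_integral integral {0..e} (\<lambda>s. (e - s)^2 * y s) / 2) {0..e}"
proof -
  define Y0 where "Y0 = (\<lambda>x. integral {0..x} y)"
  define Y1 where "Y1 = (\<lambda>x. integral {0..x} (\<lambda>s. s * y s))"
  define Y2 where "Y2 = (\<lambda>x. integral {0..x} (\<lambda>s. s^2 * y s))"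
  define G where "G x = (x * x * Y0 x - 2 * x * Y1 x + Y2 x) / 2" for x
  have c1: "continuous_on {0..T} (\<lambda>s. s * y s)" using assms(1) by (intro continuous_intros)
  have c2: "continuous_on {0..T} (\<lambda>s. s^2 * y s)" using assms(1) by (intro continuous_intros)
  have "(G has_vector_derivative W y x) (at x within {0..e})" if x: "x \<in> {0..e}" for x
  proof -
    have xT: "x \<in> {0..T}" using x assms by auto
    have d0: "(Y0 has_real_derivative y x) (at x within {0..T})" unfolding Y0_def
      by (rule integral_has_real_derivative[OF assms(1) xT])
    have d1: "(Y1 has_real_derivative x * y x) (at x within {0..T})" unfolding Y1_def
      using integral_has_real_derivative[OF c1 xT] by simp
    have d2: "(Y2 has_real_derivative x^2 * y x) (at x within {0..T})" unfolding Y2_def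
      using integral_has_real_derivative[OF c2 xT] by simp
    have "(G has_real_derivative x * Y0 x - Y1 x) (at x within {0..T})"
    proof -
      have a1: "((\<lambda>x. x * x) has_real_derivative x + x) (at x within {0..T})"
        using DERIV_mult[OF DERIV_ident DERIV_ident, of x "{0..T}"] by simp
      have a2: "((\<lambda>x. (x * x) * Y0 x) has_real_derivative (x + x) * Y0 x + y x * (x * x)) (at x within {0..T})"
        using DERIV_mult[OF a1 d0] by simp
      have a3: "((\<lambda>x. (2 * x) * Y1 x) has_real_derivative 2 * Y1 x + (x * y x) * (2 * x)) (at x within {0..T})"
        using DERIV_mult[OF DERIV_cmult[OF DERIV_ident, of 2] d1] by simp
      note a4 = DERIV_add[OF DERIV_diff[OF a2 a3] d2]
      note a5 = DERIV_cdivide[OF a4, of 2]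
      show ?thesis unfolding G_def
        by (rule DERIV_cong[OF a5]) (simp add: power2_eq_square field_simps)
    qed
    then have "(G has_real_derivative W y x) (at x within {0..T})"
      using W_alt[OF assms(1)] xT unfolding Y0_def Y1_def by auto
    then have "(G has_real_derivative W y x) (at x within {0..e})"
      by (rule has_field_derivative_subset) (use assms in auto)
    then show ?thesis using has_real_derivative_iff_has_vector_derivative by blast
  qed
  from fundamental_theorem_of_calculus[OF assms(2) this]
  have "(W y has_integral G e - G 0) {0..e}" by simp
  moreover have "G e - G 0 = integral {0..e} (\<lambda>s. (e - s)^2 * y s) / 2"
  proof -
    have ce: "continuous_on {0..e} y" using assms cont_sub by blast
    have i0: "(\<lambda>s. e^2 * y s) integrable_on {0..e}" using ce
      by (auto intro!: integrable_continuous_real continuous_intros)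
    have i1: "(\<lambda>s. 2 * e * (s * y s)) integrable_on {0..e}" using ce
      by (auto intro!: integrable_continuous_real continuous_intros)
    have i2: "(\<lambda>s. s^2 * y s) integrable_on {0..e}" using ce
      by (auto intro!: integrable_continuous_real continuous_intros)
    have "integral {0..e} (\<lambda>s. (e - s)^2 * y s) = integral {0..e} (\<lambda>s. e^2 * y s - 2 * e * (s * y s) + s^2 * y s)"
      by (rule integral_cong) (simp add: power2_eq_square algebra_simps)
    also have "\<dots> = integral {0..e} (\<lambda>s. e^2 * y s) - integral {0..e} (\<lambda>s. 2 * e * (s * y s)) + integral {0..e} (\<lambda>s. s^2 * y s)"
      using i0 i1 i2 by (simp add: integral_add integral_diff integrable_diff)
    also have "\<dots> = e^2 * Y0 e - 2 * e * Y1 e + Y2 e"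
      unfolding Y0_def Y1_def Y2_def by (simp add: integral_mult_right)
    finally show ?thesis unfolding G_def Y0_def Y1_def Y2_def by (simp add: power2_eq_square)
  qed
  ultimately show ?thesis by simp
qed

locale prob =
  fixes T \<eta> \<alpha> :: real and a :: "real \<Rightarrow> real"
  assumes T: "T > 0" and eta: "0 < \<eta>" "\<eta> < T" and alpha: "0 < \<alpha>" "\<alpha> * \<eta> < 1"
    and a_cont: "continuous_on {0..T} a" and a_nonneg: "\<forall>t\<in>{0..T}. a t \<ge> 0"
begin

definition sol :: "(real \<Rightarrow> real) \<Rightarrow> real \<Rightarrow> (real \<Rightarrow> real) \<Rightarrow> bool" where
  "sol g c u \<longleftrightarrow> continuous_on {0..T} u \<and> (\<forall>t\<in>{0..T}. u t = c - W (\<lambda>s. a s * g (max (u s) 0)) t)"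

definition phi :: "(real \<Rightarrow> real) \<Rightarrow> real" where
  "phi u = u T - \<alpha> * integral {0..\<eta>} u"

definition Ia :: real where
  "Ia = integral {\<eta>..T} (\<lambda>s. (T - s) * a s)
       + 1/2 * integral {0..\<eta>} (\<lambda>s. (2 * (T - \<eta>) + \<alpha> * (\<eta>^2 - s^2)) * a s)"

definition goodg :: "(real \<Rightarrow> real) \<Rightarrow> bool" where "goodg g \<longleftrightarrow> continuous_on {0..} g \<and> (\<forall>x\<ge>0. g x \<ge> 0)"

lemma y_cont:
  fixes u g :: "real \<Rightarrow> real"
  assumes "continuous_on {0..T} u" "goodg g"
  shows "continuous_on {0..T} (\<lambda>s. a s * g (max (u s) 0))"
proof -
  have "continuous_on {0..T} (\<lambda>s. max (u s) 0)" using assms by (intro continuous_on_max continuous_on_const)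
  moreover have "(\<lambda>s. max (u s) 0) ` {0..T} \<subseteq> {0..}" by auto
  ultimately have "continuous_on {0..T} (\<lambda>s. g (max (u s) 0))"
    using assms(2) unfolding goodg_def by (metis continuous_on_compose2)
  then show ?thesis using a_cont by (intro continuous_intros)
qed

lemma y_nonneg:
  fixes u g :: "real \<Rightarrow> real"
  assumes "goodg g" "s \<in> {0..T}" shows "a s * g (max (u s) 0) \<ge> 0"
  using assms a_nonneg unfolding goodg_def by (auto intro!: mult_nonneg_nonneg)

lemma sol_basic:
  assumes "sol g c u" "goodg g"
  shows "u 0 = c" and "\<And>t1 t2. 0 \<le> t1 \<Longrightarrow> t1 \<le> t2 \<Longrightarrow> t2 \<le> T \<Longrightarrow> u t2 \<le> u t1"
    and "\<And>t. t \<in> {0..T} \<Longrightarrow> u t \<le> c"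
proof -
  define y where "y = (\<lambda>s. a s * g (max (u s) 0))"
  have yc: "continuous_on {0..T} y" unfolding y_def using y_cont assms unfolding sol_def by blast
  have eq: "\<And>t. t \<in> {0..T} \<Longrightarrow> u t = c - W y t" using assms unfolding sol_def y_def by blast
  show u0: "u 0 = c" using eq[of 0] T by simp
  obtain B where B: "\<forall>s\<in>{0..T}. y s \<le> B"
  proof -
    have "bounded (y ` {0..T})" by (rule compact_imp_bounded[OF compact_continuous_image[OF yc compact_Icc]])
    then obtain B where "\<forall>x\<in>y ` {0..T}. \<bar>x\<bar> \<le> B" unfolding bounded_real by blast
    then have "\<forall>s\<in>{0..T}. y s \<le> B" by (auto simp: abs_le_iff)
    then show ?thesis using that by blast
  qed
  have yB: "\<forall>s\<in>{0..T}. 0 \<le> y s \<and> y s \<le> B" using B y_nonneg[OF assms(2)] unfolding y_def by auto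
  show mono: "\<And>t1 t2. 0 \<le> t1 \<Longrightarrow> t1 \<le> t2 \<Longrightarrow> t2 \<le> T \<Longrightarrow> u t2 \<le> u t1"
  proof -
    fix t1 t2 :: real assume "0 \<le> t1" "t1 \<le> t2" "t2 \<le> T"
    then show "u t2 \<le> u t1" using W_mono_lip[OF yc yB, of t1 t2] eq[of t1] eq[of t2] by auto
  qed
  show "\<And>t. t \<in> {0..T} \<Longrightarrow> u t \<le> c" using mono[of 0] u0 by auto
qed

lemma sol_bound:
  assumes "sol g c u" "goodg g" "\<forall>s\<in>{0..T}. a s * g (max (u s) 0) \<le> B"
  shows "\<And>t. t \<in> {0..T} \<Longrightarrow> c - u t \<le> T * B * T"
    and "\<And>t1 t2. t1 \<in> {0..T} \<Longrightarrow> t2 \<in> {0..T} \<Longrightarrow> \<bar>u t1 - u t2\<bar> \<le> T * B * \<bar>t1 - t2\<bar>"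
proof -
  define y where "y = (\<lambda>s. a s * g (max (u s) 0))"
  have yc: "continuous_on {0..T} y" unfolding y_def using y_cont assms unfolding sol_def by blast
  have eq: "\<And>t. t \<in> {0..T} \<Longrightarrow> u t = c - W y t" using assms unfolding sol_def y_def by blast
  have yB: "\<forall>s\<in>{0..T}. 0 \<le> y s \<and> y s \<le> B" using assms(3) y_nonneg[OF assms(2)] unfolding y_def by auto
  have "(0::real) \<in> {0..T}" using T by simp
  then have B0: "B \<ge> 0" using yB by force
  show "\<And>t. t \<in> {0..T} \<Longrightarrow> c - u t \<le> T * B * T"
  proof -
    fix t assume t: "t \<in> {0..T}"
    have "W y t - W y 0 \<le> T * B * (t - 0)" using W_mono_lip[OF yc yB, of 0 t] t by auto
    moreover have "T * B * t \<le> T * B * T" using t B0 T by (intro mult_left_mono) auto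
    ultimately show "c - u t \<le> T * B * T" using eq[OF t] by simp
  qed
  show "\<And>t1 t2. t1 \<in> {0..T} \<Longrightarrow> t2 \<in> {0..T} \<Longrightarrow> \<bar>u t1 - u t2\<bar> \<le> T * B * \<bar>t1 - t2\<bar>"
  proof -
    fix t1 t2 assume t: "t1 \<in> {0..T}" "t2 \<in> {0..T}"
    show "\<bar>u t1 - u t2\<bar> \<le> T * B * \<bar>t1 - t2\<bar>"
    proof (cases "t1 \<le> t2")
      case True
      then show ?thesis using W_mono_lip[OF yc yB, of t1 t2] t eq[of t1] eq[of t2] by auto
    next
      case False
      then show ?thesis using W_mono_lip[OF yc yB, of t2 t1] t eq[of t1] eq[of t2] by auto
    qed
  qed
qed

end

context prob begin

lemma gam_facts: "T - \<alpha> * \<eta>^2 > 0" "gam T \<eta> \<alpha> \<ge> 0" "gam T \<eta> \<alpha> < 1"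
proof -
  have "\<alpha> * \<eta> * \<eta> < 1 * \<eta>" using alpha eta by (intro mult_strict_right_mono) auto
  then have "\<alpha> * \<eta>^2 < \<eta>" by (simp add: power2_eq_square mult.assoc)
  then have h: "\<alpha> * \<eta>^2 < T" using eta by linarith
  then show "T - \<alpha> * \<eta>^2 > 0" by simp
  show "gam T \<eta> \<alpha> \<ge> 0" unfolding gam_def using h alpha eta by (intro divide_nonneg_pos) auto
  have "\<alpha> * \<eta> * (T - \<eta>) < T - \<alpha> * \<eta>^2"
  proof -
    have "\<alpha> * \<eta> * T < 1 * T" using alpha T by (intro mult_strict_right_mono) auto
    then show ?thesis by (simp add: algebra_simps power2_eq_square)
  qed
  then show "gam T \<eta> \<alpha> < 1" unfolding gam_def using h by (simp add: divide_less_eq)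
qed

lemma int_mono_ge:
  fixes u :: "real \<Rightarrow> real"
  assumes "continuous_on {0..T} u" "\<And>t. t \<in> {0..\<eta>} \<Longrightarrow> v \<le> u t"
  shows "\<eta> * v \<le> integral {0..\<eta>} u"
proof -
  have c: "continuous_on {0..\<eta>} u" using assms(1) eta cont_sub by (metis less_eq_real_def order_refl)
  have "integral {0..\<eta>} (\<lambda>t. v) \<le> integral {0..\<eta>} u"
    using assms(2) by (intro integral_le integrable_continuous_real c) auto
  then show ?thesis using eta by (simp add: integral_const_real)
qed

lemma int_mono_le:
  fixes u :: "real \<Rightarrow> real"
  assumes "continuous_on {0..T} u" "\<And>t. t \<in> {0..\<eta>} \<Longrightarrow> u t \<le> v"
  shows "integral {0..\<eta>} u \<le> \<eta> * v"
proof -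
  have c: "continuous_on {0..\<eta>} u" using assms(1) eta cont_sub by (metis less_eq_real_def order_refl)
  have "integral {0..\<eta>} u \<le> integral {0..\<eta>} (\<lambda>t. v)"
    using assms(2) by (intro integral_le integrable_continuous_real c) auto
  then show ?thesis using eta by (simp add: integral_const_real)
qed

lemma split_T:
  fixes h :: "real \<Rightarrow> real"
  assumes "continuous_on {0..T} h"
  shows "integral {0..T} h = integral {0..\<eta>} h + integral {\<eta>..T} h"
proof -
  have "h integrable_on {0..T}" by (rule integrable_continuous_real[OF assms])
  then show ?thesis using Henstock_Kurzweil_Integration.integral_combine[where a=0 and c=\<eta> and b=T and f=h] eta by simp
qed

lemma cone:
  fixes u g :: "real \<Rightarrow> real"
  assumes "sol g c u" "goodg g" "phi u \<ge> 0"
  shows "u T \<ge> gam T \<eta> \<alpha> * c"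
proof -
  define y where "y = (\<lambda>s. a s * g (max (u s) 0))"
  have uc: "continuous_on {0..T} u" using assms unfolding sol_def by blast
  have yc: "continuous_on {0..T} y" unfolding y_def using y_cont assms unfolding sol_def by blast
  have eq: "\<And>t. t \<in> {0..T} \<Longrightarrow> u t = c - W y t" using assms unfolding sol_def y_def by blast
  have y0: "\<And>s. s \<in> {0..T} \<Longrightarrow> y s \<ge> 0" unfolding y_def using y_nonneg[OF assms(2)] by blast
  have ige: "\<eta> * u \<eta> \<le> integral {0..\<eta>} u"
    using sol_basic(2)[OF assms(1,2)] eta by (intro int_mono_ge[OF uc]) auto
  have c1: "continuous_on {0..T} (\<lambda>s. (T - s) * y s)" using yc by (intro continuous_intros)
  have WT: "W y T = integral {0..\<eta>} (\<lambda>s. (T - s) * y s) + integral {\<eta>..T} (\<lambda>s. (T - s) * y s)"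
    unfolding W_def by (rule split_T[OF c1])
  have "integral {\<eta>..T} (\<lambda>s. (T - s) * y s) \<ge> 0"
    using y0 eta by (intro integral_nonneg integrable_continuous_real cont_sub[OF c1]) auto
  have ce: "continuous_on {0..\<eta>} y" using yc eta cont_sub by (metis less_eq_real_def order_refl)
  have "T * W y \<eta> = integral {0..\<eta>} (\<lambda>s. T * ((\<eta> - s) * y s))"
    unfolding W_def by (simp add: integral_mult_right)
  also have "\<dots> \<le> integral {0..\<eta>} (\<lambda>s. \<eta> * ((T - s) * y s))"
  proof (intro integral_le integrable_continuous_real)
    show "continuous_on {0..\<eta>} (\<lambda>s. T * ((\<eta> - s) * y s))" using ce by (intro continuous_intros)
    show "continuous_on {0..\<eta>} (\<lambda>s. \<eta> * ((T - s) * y s))" using ce by (intro continuous_intros)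
    fix s assume s: "s \<in> {0..\<eta>}"
    have "\<eta> * s \<le> T * s" using s eta by (intro mult_right_mono) auto
    then have "T * (\<eta> - s) \<le> \<eta> * (T - s)" by (simp add: algebra_simps)
    moreover have "y s \<ge> 0" using y0 s eta by auto
    ultimately have "T * (\<eta> - s) * y s \<le> \<eta> * (T - s) * y s" by (rule mult_right_mono)
    then show "T * ((\<eta> - s) * y s) \<le> \<eta> * ((T - s) * y s)" by (simp add: mult.assoc)
  qed
  also have "\<dots> = \<eta> * integral {0..\<eta>} (\<lambda>s. (T - s) * y s)" by (simp add: integral_mult_right)
  also have "\<dots> \<le> \<eta> * W y T" using WT \<open>integral {\<eta>..T} (\<lambda>s. (T - s) * y s) \<ge> 0\<close> eta
    by (simp add: mult_left_mono)
  finally have chord: "T * W y \<eta> \<le> \<eta> * W y T" .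
  have uT: "u T = c - W y T" using eq T by simp
  have ue: "u \<eta> = c - W y \<eta>" using eq eta by simp
  have "u T \<ge> \<alpha> * integral {0..\<eta>} u" using assms(3) unfolding phi_def by simp
  also have "\<alpha> * integral {0..\<eta>} u \<ge> \<alpha> * (\<eta> * u \<eta>)" using ige alpha by (simp add: mult_left_mono)
  finally have h1: "u T \<ge> \<alpha> * \<eta> * (c - W y \<eta>)" using ue by (simp add: mult.assoc)
  have ae: "\<alpha> * \<eta> \<ge> 0" using alpha eta by simp
  have "T * u T \<ge> T * (\<alpha> * \<eta> * (c - W y \<eta>))" using h1 T by (simp add: mult_left_mono)
  then have e1: "T * u T \<ge> \<alpha> * \<eta> * T * c - \<alpha> * \<eta> * (T * W y \<eta>)" by (simp add: algebra_simps)
  have e2: "\<alpha> * \<eta> * (T * W y \<eta>) \<le> \<alpha> * \<eta> * (\<eta> * W y T)" using chord ae by (rule mult_left_mono)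
  from e1 e2 have "T * u T \<ge> \<alpha> * \<eta> * T * c - \<alpha> * \<eta> * (\<eta> * W y T)" by linarith
  moreover have "W y T = c - u T" using uT by simp
  ultimately have "T * u T \<ge> \<alpha> * \<eta> * T * c - \<alpha> * \<eta> * (\<eta> * (c - u T))" by simp
  then have "u T * (T - \<alpha> * \<eta>^2) \<ge> \<alpha> * \<eta> * (T - \<eta>) * c"
    by (simp add: algebra_simps power2_eq_square; linarith?)
  then show ?thesis using gam_facts(1) unfolding gam_def by (simp add: pos_divide_le_eq mult.commute)
qed


lemma phi_upper:
  fixes u g :: "real \<Rightarrow> real"
  assumes "sol g c u" "goodg g" "m \<ge> 0" "\<forall>s\<in>{0..T}. a s * g (max (u s) 0) \<ge> m * a s"
  shows "phi u \<le> c * (1 - \<alpha> * \<eta>) - m * Ia"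
proof -
  define y where "y = (\<lambda>s. a s * g (max (u s) 0))"
  have uc: "continuous_on {0..T} u" using assms unfolding sol_def by blast
  have yc: "continuous_on {0..T} y" unfolding y_def using y_cont assms unfolding sol_def by blast
  have eq: "\<And>t. t \<in> {0..T} \<Longrightarrow> u t = c - W y t" using assms unfolding sol_def y_def by blast
  have ym: "\<And>s. s \<in> {0..T} \<Longrightarrow> y s \<ge> m * a s" using assms(4) unfolding y_def by blast
  have ce: "continuous_on {0..\<eta>} y" using yc eta cont_sub by (metis less_eq_real_def order_refl)
  have ace: "continuous_on {0..\<eta>} a" using a_cont eta cont_sub by (metis less_eq_real_def order_refl)
  have cT: "continuous_on {\<eta>..T} y" using yc eta cont_sub by (metis less_eq_real_def order_refl)
  have acT: "continuous_on {\<eta>..T} a" using a_cont eta cont_sub by (metis less_eq_real_def order_refl)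
  have iW: "integral {0..\<eta>} (W y) = integral {0..\<eta>} (\<lambda>s. (\<eta> - s)^2 * y s) / 2"
    using W_integral[OF yc, of \<eta>] eta by (simp add: integral_unique)
  have "integral {0..\<eta>} u = integral {0..\<eta>} (\<lambda>t. c - W y t)"
    using eq eta by (intro integral_cong) auto
  also have "\<dots> = integral {0..\<eta>} (\<lambda>t. c) - integral {0..\<eta>} (W y)"
  proof (rule integral_diff)
    show "(\<lambda>t. c) integrable_on {0..\<eta>}" by (rule integrable_continuous_real) (rule continuous_on_const)
    show "W y integrable_on {0..\<eta>}" using W_integral[OF yc, of \<eta>] eta
      by (meson has_integral_integrable less_eq_real_def)
  qed
  finally have iu: "integral {0..\<eta>} u = c * \<eta> - integral {0..\<eta>} (\<lambda>s. (\<eta> - s)^2 * y s) / 2"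
    using iW eta by (simp add: integral_const_real)
  have c1: "continuous_on {0..T} (\<lambda>s. (T - s) * y s)" using yc by (intro continuous_intros)
  have WT: "W y T = integral {0..\<eta>} (\<lambda>s. (T - s) * y s) + integral {\<eta>..T} (\<lambda>s. (T - s) * y s)"
    unfolding W_def by (rule split_T[OF c1])
  have uT: "u T = c - W y T" using eq T by simp
  define J1 where "J1 = integral {\<eta>..T} (\<lambda>s. (T - s) * y s)"
  define J2 where "J2 = integral {0..\<eta>} (\<lambda>s. ((T - s) - \<alpha> / 2 * (\<eta> - s)^2) * y s)"
  have J2eq: "J2 = integral {0..\<eta>} (\<lambda>s. (T - s) * y s) - \<alpha> / 2 * integral {0..\<eta>} (\<lambda>s. (\<eta> - s)^2 * y s)"
  proof -
    have "J2 = integral {0..\<eta>} (\<lambda>s. (T - s) * y s - \<alpha> / 2 * ((\<eta> - s)^2 * y s))"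
      unfolding J2_def by (rule integral_cong) (simp add: algebra_simps)
    also have "\<dots> = integral {0..\<eta>} (\<lambda>s. (T - s) * y s) - integral {0..\<eta>} (\<lambda>s. \<alpha> / 2 * ((\<eta> - s)^2 * y s))"
      using ce by (intro integral_diff integrable_continuous_real continuous_intros)
    finally show ?thesis by (simp add: integral_mult_right)
  qed
  have phieq: "phi u = c * (1 - \<alpha> * \<eta>) - (J1 + J2)"
  proof -
    define P where "P = integral {0..\<eta>} (\<lambda>s. (\<eta> - s)^2 * y s)"
    define Q0 where "Q0 = integral {0..\<eta>} (\<lambda>s. (T - s) * y s)"
    have iu': "integral {0..\<eta>} u = c * \<eta> - P / 2" using iu unfolding P_def by simp
    have a1: "\<alpha> * integral {0..\<eta>} u = \<alpha> * \<eta> * c - \<alpha> * P / 2" unfolding iu'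
      by (simp add: algebra_simps)
    have a2: "J2 = Q0 - \<alpha> * P / 2" using J2eq unfolding P_def Q0_def by simp
    have a3: "u T = c - Q0 - J1" using uT WT unfolding Q0_def J1_def by simp
    show ?thesis unfolding phi_def using a1 a2 a3 by (simp add: algebra_simps)
  qed
  have J1ge: "J1 \<ge> m * integral {\<eta>..T} (\<lambda>s. (T - s) * a s)"
  proof -
    have "integral {\<eta>..T} (\<lambda>s. m * ((T - s) * a s)) \<le> J1" unfolding J1_def
    proof (intro integral_le integrable_continuous_real)
      show "continuous_on {\<eta>..T} (\<lambda>s. m * ((T - s) * a s))" using acT by (intro continuous_intros)
      show "continuous_on {\<eta>..T} (\<lambda>s. (T - s) * y s)" using cT by (intro continuous_intros)
      fix s assume s: "s \<in> {\<eta>..T}"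
      then have "s \<in> {0..T}" using eta by auto
      then have "m * a s \<le> y s" by (rule ym)
      moreover have "T - s \<ge> 0" using s by auto
      ultimately have "(T - s) * (m * a s) \<le> (T - s) * y s" by (rule mult_left_mono)
      then show "m * ((T - s) * a s) \<le> (T - s) * y s" by (simp add: algebra_simps)
    qed
    then show ?thesis by (simp add: integral_mult_right)
  qed
  have J2ge: "J2 \<ge> m * (1/2 * integral {0..\<eta>} (\<lambda>s. (2 * (T - \<eta>) + \<alpha> * (\<eta>^2 - s^2)) * a s))"
  proof -
    have "integral {0..\<eta>} (\<lambda>s. m * (1/2 * ((2 * (T - \<eta>) + \<alpha> * (\<eta>^2 - s^2)) * a s))) \<le> J2" unfolding J2_def
    proof (intro integral_le integrable_continuous_real)
      show "continuous_on {0..\<eta>} (\<lambda>s. m * (1/2 * ((2 * (T - \<eta>) + \<alpha> * (\<eta>^2 - s^2)) * a s)))"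
        using ace by (intro continuous_intros)
      show "continuous_on {0..\<eta>} (\<lambda>s. ((T - s) - \<alpha> / 2 * (\<eta> - s)^2) * y s)" using ce by (intro continuous_intros)
      fix s assume s: "s \<in> {0..\<eta>}"
      then have sT: "s \<in> {0..T}" using eta by auto
      define K where "K = (T - s) - \<alpha> / 2 * (\<eta> - s)^2"
      define k where "k = 1/2 * (2 * (T - \<eta>) + \<alpha> * (\<eta>^2 - s^2))"
      have "K - k = (\<eta> - s) * (1 - \<alpha> * \<eta>)" unfolding K_def k_def by (simp add: algebra_simps power2_eq_square)
      moreover have "(\<eta> - s) * (1 - \<alpha> * \<eta>) \<ge> 0" using s alpha by auto
      ultimately have Kk: "k \<le> K" by simp
      have "s^2 \<le> \<eta>^2" using s by (intro power_mono) auto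
      then have k0: "k \<ge> 0" unfolding k_def using eta alpha by (intro mult_nonneg_nonneg add_nonneg_nonneg) auto
      have ma: "m * a s \<ge> 0" using assms(3) a_nonneg sT by auto
      have "k * (m * a s) \<le> K * y s" using Kk ym[OF sT] k0 ma by (intro mult_mono) auto
      then show "m * (1/2 * ((2 * (T - \<eta>) + \<alpha> * (\<eta>^2 - s^2)) * a s)) \<le> ((T - s) - \<alpha> / 2 * (\<eta> - s)^2) * y s"
        unfolding K_def k_def by (simp add: algebra_simps)
    qed
    then show ?thesis by (simp add: integral_mult_right)
  qed
  have "J1 + J2 \<ge> m * Ia" using J1ge J2ge unfolding Ia_def by (simp add: algebra_simps)
  then show ?thesis using phieq by simp
qed

lemma rho_neg:
  fixes u g :: "real \<Rightarrow> real"
  assumes "sol g c u" "goodg g" "c > 0" "m \<ge> 0" "\<forall>x\<in>{gam T \<eta> \<alpha> * c..c}. g x \<ge> m"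
    "m * Ia > c * (1 - \<alpha> * \<eta>)"
  shows "phi u < 0"
proof (rule ccontr)
  assume "\<not> phi u < 0"
  then have p: "phi u \<ge> 0" by simp
  have cone: "u T \<ge> gam T \<eta> \<alpha> * c" by (rule cone[OF assms(1,2) p])
  have "\<forall>s\<in>{0..T}. a s * g (max (u s) 0) \<ge> m * a s"
  proof
    fix s assume s: "s \<in> {0..T}"
    have "u s \<ge> u T" using sol_basic(2)[OF assms(1,2), of s T] s by auto
    then have l: "u s \<ge> gam T \<eta> \<alpha> * c" using cone by simp
    have "gam T \<eta> \<alpha> * c \<ge> 0" using gam_facts assms(3) by simp
    then have "max (u s) 0 = u s" using l by simp
    moreover have "u s \<le> c" using sol_basic(3)[OF assms(1,2) s] .
    ultimately have "g (max (u s) 0) \<ge> m" using assms(5) l by auto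
    moreover have "a s \<ge> 0" using a_nonneg s by blast
    ultimately have "a s * m \<le> a s * g (max (u s) 0)" by (intro mult_left_mono)
    then show "a s * g (max (u s) 0) \<ge> m * a s" by (simp add: mult.commute)
  qed
  from phi_upper[OF assms(1,2,4) this] have "phi u \<le> c * (1 - \<alpha> * \<eta>) - m * Ia" .
  then show False using assms(6) p by simp
qed

lemma phi_lower:
  fixes u g :: "real \<Rightarrow> real"
  assumes "sol g c u" "goodg g" "c \<ge> 0" "\<forall>x\<in>{0..c}. g x \<le> B0" "\<forall>t\<in>{0..T}. a t \<le> A"
  shows "phi u \<ge> c * (1 - \<alpha> * \<eta>) - T * (A * B0) * T"
proof -
  have uc: "continuous_on {0..T} u" using assms unfolding sol_def by blast
  have yb: "\<forall>s\<in>{0..T}. a s * g (max (u s) 0) \<le> A * B0"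
  proof
    fix s assume s: "s \<in> {0..T}"
    have "u s \<le> c" using sol_basic(3)[OF assms(1,2) s] .
    then have "max (u s) 0 \<in> {0..c}" using assms(3) by auto
    then have "g (max (u s) 0) \<le> B0" using assms(4) by blast
    moreover have "g (max (u s) 0) \<ge> 0" using assms(2) unfolding goodg_def by auto
    moreover have "0 \<le> a s" "a s \<le> A" using a_nonneg assms(5) s by auto
    ultimately show "a s * g (max (u s) 0) \<le> A * B0"
      by (intro mult_mono) auto
  qed
  have "c - u T \<le> T * (A * B0) * T" using sol_bound(1)[OF assms(1,2) yb, of T] T by simp
  moreover have "integral {0..\<eta>} u \<le> \<eta> * c"
    using sol_basic(3)[OF assms(1,2)] eta by (intro int_mono_le[OF uc]) auto
  then have "\<alpha> * integral {0..\<eta>} u \<le> \<alpha> * (\<eta> * c)" using alpha by (simp add: mult_left_mono)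
  ultimately show ?thesis unfolding phi_def by (simp add: algebra_simps)
qed

end

lemma W_cont:
  assumes "continuous_on {0..T} y"
  shows "continuous_on {0..T} (W y)"
  unfolding continuous_on_eq_continuous_within
  using W_deriv[OF assms] DERIV_continuous by blast

definition clamp :: "real \<Rightarrow> real \<Rightarrow> real" where "clamp T t = max 0 (min T t)"

lemma clamp_in: "T \<ge> 0 \<Longrightarrow> clamp T t \<in> {0..T}" unfolding clamp_def by auto
lemma clamp_id: "t \<in> {0..T} \<Longrightarrow> clamp T t = t" unfolding clamp_def by auto
lemma clamp_lip: "\<bar>clamp T x - clamp T y\<bar> \<le> \<bar>x - y\<bar>" unfolding clamp_def by (auto simp: abs_if min_def max_def)
lemma clamp_cont: "continuous_on UNIV (clamp T)" unfolding clamp_def by (intro continuous_intros)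

lemma exp_int:
  fixes K \<tau> :: real
  assumes "K > 0" "0 \<le> \<tau>"
  shows "integral {0..\<tau>} (\<lambda>s. exp (K * s)) = (exp (K * \<tau>) - 1) / K"
proof -
  have "\<And>x. x \<in> {0..\<tau>} \<Longrightarrow> ((\<lambda>s. exp (K * s) / K) has_vector_derivative exp (K * x)) (at x within {0..\<tau>})"
  proof -
    fix x
    have "((\<lambda>s. exp (K * s) / K) has_real_derivative exp (K * x) * K / K) (at x within {0..\<tau>})"
      by (intro derivative_eq_intros) (use assms in auto)
    moreover have "exp (K * x) * K / K = exp (K * x)" using assms(1) by simp
    ultimately show "((\<lambda>s. exp (K * s) / K) has_vector_derivative exp (K * x)) (at x within {0..\<tau>})"
      by (simp add: has_real_derivative_iff_has_vector_derivative)
  qed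
  from fundamental_theorem_of_calculus[OF assms(2) this]
  have "((\<lambda>s. exp (K * s)) has_integral exp (K * \<tau>) / K - exp (K * 0) / K) {0..\<tau>}" by simp
  then show ?thesis by (simp add: integral_unique diff_divide_distrib)
qed

context prob begin

lemma ivp:
  fixes g :: "real \<Rightarrow> real"
  assumes lip: "\<forall>x y. \<bar>g x - g y\<bar> \<le> L * \<bar>x - y\<bar>" and L: "L \<ge> 0" and A: "\<forall>t\<in>{0..T}. a t \<le> A"
  shows "\<exists>S K. (\<forall>c. continuous_on {0..T} (S c) \<and> (\<forall>t\<in>{0..T}. S c t = c - W (\<lambda>s. a s * g (S c s)) t))
     \<and> (\<forall>c d t. t \<in> {0..T} \<longrightarrow> \<bar>S c t - S d t\<bar> \<le> K * \<bar>c - d\<bar>)"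
proof -
  have "(0::real) \<in> {0..T}" using T by simp
  then have "a 0 \<ge> 0" "a 0 \<le> A" using A a_nonneg by auto
  then have A0: "A \<ge> 0" by linarith
  have gc: "continuous_on UNIV g"
  proof (rule lipschitz_on_continuous_on)
    show "L-lipschitz_on UNIV g" unfolding lipschitz_on_def dist_real_def using lip L by auto
  qed
  define K0 where "K0 = T * A * L + 1"
  have TAL: "T * A * L \<ge> 0" using T A0 L by simp
  have K0: "K0 > 0" unfolding K0_def using TAL by simp
  define q where "q = T * A * L / K0"
  have q0: "0 \<le> q" unfolding q_def using TAL K0 by simp
  have q1: "q < 1" unfolding q_def using K0 by (simp add: K0_def)
  define h where "h w s = a s * g (exp (K0 * s) * apply_bcontfun w s)" for w :: "real \<Rightarrow>\<^sub>C real" and s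
  have hc: "continuous_on {0..T} (h w)" for w
  proof -
    have "continuous_on {0..T} (\<lambda>s. exp (K0 * s) * apply_bcontfun w s)"
      by (intro continuous_intros continuous_on_apply_bcontfun)
    then have "continuous_on {0..T} (\<lambda>s. g (exp (K0 * s) * apply_bcontfun w s))"
      using gc by (metis continuous_on_compose2 subset_UNIV)
    then show ?thesis unfolding h_def using a_cont by (intro continuous_intros)
  qed
  define F where "F c w \<tau> = exp (- (K0 * \<tau>)) * (c - W (h w) \<tau>)" for c w \<tau>
  have Fc: "continuous_on {0..T} (F c w)" for c w
    unfolding F_def using W_cont[OF hc] by (intro continuous_intros)
  have Fb: "(\<lambda>t. F c w (clamp T t)) \<in> bcontfun" for c w
  proof -
    have im: "clamp T ` UNIV \<subseteq> {0..T}" using clamp_in T by auto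
    have "continuous_on UNIV (\<lambda>t. F c w (clamp T t))"
      using continuous_on_compose2[OF Fc clamp_cont im] .
    moreover have "bounded (range (\<lambda>t. F c w (clamp T t)))"
    proof -
      have "bounded (F c w ` {0..T})"
        by (rule compact_imp_bounded[OF compact_continuous_image[OF Fc compact_Icc]])
      moreover have "range (\<lambda>t. F c w (clamp T t)) \<subseteq> F c w ` {0..T}" using im by auto
      ultimately show ?thesis by (rule bounded_subset)
    qed
    ultimately show ?thesis unfolding bcontfun_def by simp
  qed
  define Phi where "Phi c w = Bcontfun (\<lambda>t. F c w (clamp T t))" for c w
  have Phiapp: "apply_bcontfun (Phi c w) t = F c w (clamp T t)" for c w t
    unfolding Phi_def by (simp add: Bcontfun_inverse[OF Fb])
  have contr: "dist (Phi c w1) (Phi c w2) \<le> q * dist w1 w2" for c w1 w2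
  proof (rule dist_bound)
    fix t
    define \<tau> where "\<tau> = clamp T t"
    have \<tau>: "\<tau> \<in> {0..T}" unfolding \<tau>_def using clamp_in T by auto
    define D where "D = dist w1 w2"
    have D0: "D \<ge> 0" unfolding D_def by simp
    have c\<tau>: "\<And>w. continuous_on {0..\<tau>} (h w)" using hc \<tau> cont_sub by (metis atLeastAtMost_iff order_refl)
    have "\<bar>W (h w1) \<tau> - W (h w2) \<tau>\<bar> \<le> T * A * L * D * ((exp (K0 * \<tau>) - 1) / K0)"
    proof -
      have i1: "(\<lambda>s. (\<tau> - s) * h w1 s) integrable_on {0..\<tau>}"
        using c\<tau> by (intro integrable_continuous_real continuous_intros)
      have i2: "(\<lambda>s. (\<tau> - s) * h w2 s) integrable_on {0..\<tau>}"
        using c\<tau> by (intro integrable_continuous_real continuous_intros)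
      have "W (h w1) \<tau> - W (h w2) \<tau> = integral {0..\<tau>} (\<lambda>s. (\<tau> - s) * h w1 s - (\<tau> - s) * h w2 s)"
        unfolding W_def by (rule integral_diff[OF i1 i2, symmetric])
      also have "\<bar>\<dots>\<bar> \<le> integral {0..\<tau>} (\<lambda>s. T * A * L * D * exp (K0 * s))"
      proof -
        have "norm (integral {0..\<tau>} (\<lambda>s. (\<tau> - s) * h w1 s - (\<tau> - s) * h w2 s))
              \<le> integral {0..\<tau>} (\<lambda>s. T * A * L * D * exp (K0 * s))"
        proof (rule integral_norm_bound_integral)
          show "(\<lambda>s. (\<tau> - s) * h w1 s - (\<tau> - s) * h w2 s) integrable_on {0..\<tau>}" using i1 i2 by (rule integrable_diff)
          show "(\<lambda>s. T * A * L * D * exp (K0 * s)) integrable_on {0..\<tau>}"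
            by (intro integrable_continuous_real continuous_intros)
          fix s assume s: "s \<in> {0..\<tau>}"
          then have sT: "s \<in> {0..T}" using \<tau> by auto
          have ws: "\<bar>apply_bcontfun w1 s - apply_bcontfun w2 s\<bar> \<le> D"
            unfolding D_def using dist_bounded[of w1 s w2] by (simp add: dist_real_def)
          have "\<bar>g (exp (K0 * s) * apply_bcontfun w1 s) - g (exp (K0 * s) * apply_bcontfun w2 s)\<bar>
                \<le> L * \<bar>exp (K0 * s) * apply_bcontfun w1 s - exp (K0 * s) * apply_bcontfun w2 s\<bar>"
            using lip by blast
          also have "\<dots> = L * (exp (K0 * s) * \<bar>apply_bcontfun w1 s - apply_bcontfun w2 s\<bar>)"
            by (simp add: abs_mult right_diff_distrib[symmetric])
          also have "\<dots> \<le> L * (exp (K0 * s) * D)" using ws L by (simp add: mult_left_mono)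
          finally have gd: "\<bar>g (exp (K0 * s) * apply_bcontfun w1 s) - g (exp (K0 * s) * apply_bcontfun w2 s)\<bar>
                \<le> L * (exp (K0 * s) * D)" .
          have as: "0 \<le> a s" "a s \<le> A" using a_nonneg A sT by auto
          have hd: "\<bar>h w1 s - h w2 s\<bar> \<le> A * (L * (exp (K0 * s) * D))"
          proof -
            have "\<bar>h w1 s - h w2 s\<bar> = a s * \<bar>g (exp (K0 * s) * apply_bcontfun w1 s) - g (exp (K0 * s) * apply_bcontfun w2 s)\<bar>"
              unfolding h_def using as by (simp add: abs_mult right_diff_distrib[symmetric])
            also have "\<dots> \<le> A * (L * (exp (K0 * s) * D))"
              using as gd by (intro mult_mono) auto
            finally show ?thesis .
          qed
          have ts: "\<bar>\<tau> - s\<bar> \<le> T" using s \<tau> by auto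
          have "norm ((\<tau> - s) * h w1 s - (\<tau> - s) * h w2 s) = \<bar>\<tau> - s\<bar> * \<bar>h w1 s - h w2 s\<bar>"
            by (simp add: abs_mult right_diff_distrib[symmetric])
          also have "\<dots> \<le> T * (A * (L * (exp (K0 * s) * D)))"
            using ts hd by (intro mult_mono) auto
          finally show "norm ((\<tau> - s) * h w1 s - (\<tau> - s) * h w2 s) \<le> T * A * L * D * exp (K0 * s)"
            by (simp add: mult_ac)
        qed
        then show ?thesis by simp
      qed
      also have "\<dots> = T * A * L * D * ((exp (K0 * \<tau>) - 1) / K0)"
        using exp_int[OF K0, of \<tau>] \<tau> by (simp add: integral_mult_right)
      finally show ?thesis .
    qed
    then have "exp (- (K0 * \<tau>)) * \<bar>W (h w1) \<tau> - W (h w2) \<tau>\<bar> \<le> exp (- (K0 * \<tau>)) * (T * A * L * D * ((exp (K0 * \<tau>) - 1) / K0))"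
      by (rule mult_left_mono) simp
    also have "\<dots> = T * A * L * D * ((1 - exp (- (K0 * \<tau>))) / K0)"
      by (simp add: field_simps exp_minus)
    also have "\<dots> \<le> T * A * L * D * (1 / K0)"
      using TAL D0 K0 by (intro mult_left_mono divide_right_mono) auto
    also have "\<dots> = q * D" unfolding q_def by simp
    finally have *: "exp (- (K0 * \<tau>)) * \<bar>W (h w1) \<tau> - W (h w2) \<tau>\<bar> \<le> q * D" .
    have "dist (apply_bcontfun (Phi c w1) t) (apply_bcontfun (Phi c w2) t)
          = exp (- (K0 * \<tau>)) * \<bar>W (h w1) \<tau> - W (h w2) \<tau>\<bar>"
      unfolding Phiapp F_def \<tau>_def[symmetric] dist_real_def
      by (simp add: abs_mult right_diff_distrib[symmetric])
    then show "dist (apply_bcontfun (Phi c w1) t) (apply_bcontfun (Phi c w2) t) \<le> q * dist w1 w2"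
      using * D_def by simp
  qed
  have shift: "dist (Phi c w) (Phi d w) \<le> \<bar>c - d\<bar>" for c d w
  proof (rule dist_bound)
    fix t
    define \<tau> where "\<tau> = clamp T t"
    have \<tau>: "\<tau> \<in> {0..T}" unfolding \<tau>_def using clamp_in T by auto
    have e: "exp (- (K0 * \<tau>)) \<le> 1" using K0 \<tau> by simp
    have "dist (apply_bcontfun (Phi c w) t) (apply_bcontfun (Phi d w) t) = exp (- (K0 * \<tau>)) * \<bar>c - d\<bar>"
      unfolding Phiapp F_def \<tau>_def[symmetric] dist_real_def
      by (simp add: abs_mult right_diff_distrib[symmetric])
    also have "\<dots> \<le> 1 * \<bar>c - d\<bar>" using e by (intro mult_right_mono) auto
    finally show "dist (apply_bcontfun (Phi c w) t) (apply_bcontfun (Phi d w) t) \<le> \<bar>c - d\<bar>" by simp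
  qed
  have fix1: "\<exists>!w. Phi c w = w" for c
    by (rule banach_fix_type[OF q0 q1]) (use contr in auto)
  define wf where "wf c = (THE w. Phi c w = w)" for c
  have wf: "Phi c (wf c) = wf c" for c unfolding wf_def using theI'[OF fix1] .
  have wlip: "dist (wf c) (wf d) \<le> \<bar>c - d\<bar> / (1 - q)" for c d
  proof -
    have "dist (wf c) (wf d) = dist (Phi c (wf c)) (Phi d (wf d))" using wf by simp
    also have "\<dots> \<le> dist (Phi c (wf c)) (Phi d (wf c)) + dist (Phi d (wf c)) (Phi d (wf d))"
      by (rule dist_triangle)
    also have "\<dots> \<le> \<bar>c - d\<bar> + q * dist (wf c) (wf d)" using shift contr by (intro add_mono)
    finally have "(1 - q) * dist (wf c) (wf d) \<le> \<bar>c - d\<bar>" by (simp add: algebra_simps)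
    then show ?thesis using q1 by (simp add: pos_le_divide_eq mult.commute)
  qed
  define S where "S c t = exp (K0 * t) * apply_bcontfun (wf c) t" for c t
  have hS: "h (wf c) = (\<lambda>s. a s * g (S c s))" for c unfolding h_def S_def by simp
  show ?thesis
  proof (intro exI conjI allI impI ballI)
    fix c
    show "continuous_on {0..T} (S c)" unfolding S_def by (intro continuous_intros continuous_on_apply_bcontfun)
    fix t assume t: "t \<in> {0..T}"
    have "apply_bcontfun (wf c) t = apply_bcontfun (Phi c (wf c)) t" using wf by simp
    also have "\<dots> = exp (- (K0 * t)) * (c - W (\<lambda>s. a s * g (S c s)) t)"
      unfolding Phiapp clamp_id[OF t] F_def hS ..
    finally show "S c t = c - W (\<lambda>s. a s * g (S c s)) t"
      unfolding S_def by (simp add: exp_minus field_simps)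
  next
    fix c d t assume t: "t \<in> {0..T}"
    have "\<bar>S c t - S d t\<bar> = exp (K0 * t) * \<bar>apply_bcontfun (wf c) t - apply_bcontfun (wf d) t\<bar>"
      unfolding S_def by (simp add: abs_mult right_diff_distrib[symmetric])
    also have "\<dots> \<le> exp (K0 * T) * (\<bar>c - d\<bar> / (1 - q))"
    proof (rule mult_mono)
      show "exp (K0 * t) \<le> exp (K0 * T)" using t K0 by (simp add: mult_left_mono)
      show "\<bar>apply_bcontfun (wf c) t - apply_bcontfun (wf d) t\<bar> \<le> \<bar>c - d\<bar> / (1 - q)"
        using dist_bounded[of "wf c" t "wf d"] wlip[of c d] by (simp add: dist_real_def)
    qed auto
    finally show "\<bar>S c t - S d t\<bar> \<le> exp (K0 * T) / (1 - q) * \<bar>c - d\<bar>" by simp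
  qed
qed

end

section \<open>Inf-convolution\<close>

definition gi :: "(real \<Rightarrow> real) \<Rightarrow> real \<Rightarrow> nat \<Rightarrow> real \<Rightarrow> real" where
  "gi f R n x = Inf ((\<lambda>y. f y + real n * \<bar>x - y\<bar>) ` {0..R})"

lemma gi_bdd: "\<forall>y\<in>{0..R}. f y \<ge> 0 \<Longrightarrow> bdd_below ((\<lambda>y. f y + real n * \<bar>x - y\<bar>) ` {0..R})"
  by (rule bdd_belowI[where m=0]) auto

lemma gi_nonneg:
  assumes "R \<ge> 0" "\<forall>y\<in>{0..R}. f y \<ge> 0"
  shows "gi f R n x \<ge> 0"
  unfolding gi_def using assms by (intro cInf_greatest) auto

lemma gi_le:
  assumes "\<forall>y\<in>{0..R}. f y \<ge> 0" "x \<in> {0..R}"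
  shows "gi f R n x \<le> f x"
proof -
  have "gi f R n x \<le> f x + real n * \<bar>x - x\<bar>"
    unfolding gi_def apply (rule cInf_lower) apply (rule rev_image_eqI[of x])
    using assms by (auto intro: gi_bdd)
  then show ?thesis by simp
qed

lemma gi_lip:
  assumes "R \<ge> 0" "\<forall>y\<in>{0..R}. f y \<ge> 0"
  shows "\<bar>gi f R n x - gi f R n x'\<bar> \<le> real n * \<bar>x - x'\<bar>"
proof -
  have one: "gi f R n x - real n * \<bar>x - x'\<bar> \<le> gi f R n x'" for x x'
  proof -
    have "gi f R n x - real n * \<bar>x - x'\<bar> \<le> f y + real n * \<bar>x' - y\<bar>" if y: "y \<in> {0..R}" for y
    proof -
      have "gi f R n x \<le> f y + real n * \<bar>x - y\<bar>"
        unfolding gi_def using assms y by (intro cInf_lower gi_bdd) auto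
      moreover have "real n * \<bar>x - y\<bar> \<le> real n * \<bar>x' - y\<bar> + real n * \<bar>x - x'\<bar>"
        by (simp add: distrib_left[symmetric] mult_left_mono)
      ultimately show ?thesis by linarith
    qed
    then show ?thesis unfolding gi_def[of f R n x'] using assms by (intro cInf_greatest) auto
  qed
  show ?thesis using one[of x x'] one[of x' x] by (simp add: abs_minus_commute)
qed

lemma gi_approx:
  assumes "R \<ge> 0" "\<forall>y\<in>{0..R}. f y \<ge> 0" "continuous_on {0..R} f" "e > 0"
  shows "\<exists>N. \<forall>n\<ge>N. \<forall>x\<in>{0..R}. gi f R n x \<ge> f x - e"
proof -
  have "uniformly_continuous_on {0..R} f" using assms(3) by (rule compact_uniformly_continuous) simp
  then obtain d where d: "d > 0" "\<forall>x\<in>{0..R}. \<forall>y\<in>{0..R}. dist y x < d \<longrightarrow> dist (f y) (f x) < e"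
    unfolding uniformly_continuous_on_def using assms(4) by metis
  obtain M where M: "\<forall>y\<in>{0..R}. f y \<le> M"
  proof -
    have "bounded (f ` {0..R})" by (rule compact_imp_bounded[OF compact_continuous_image[OF assms(3) compact_Icc]])
    then obtain M where "\<forall>z\<in>f ` {0..R}. \<bar>z\<bar> \<le> M" unfolding bounded_real by blast
    then have "\<forall>y\<in>{0..R}. f y \<le> M" by (auto simp: abs_le_iff)
    then show ?thesis using that by blast
  qed
  obtain N :: nat where N: "real N \<ge> M / d" using real_arch_simple by blast
  show ?thesis
  proof (intro exI allI impI ballI)
    fix n x assume n: "N \<le> n" and x: "x \<in> {0..R}"
    show "gi f R n x \<ge> f x - e" unfolding gi_def
    proof (rule cInf_greatest)
      show "(\<lambda>y. f y + real n * \<bar>x - y\<bar>) ` {0..R} \<noteq> {}" using assms by auto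
      fix z assume "z \<in> (\<lambda>y. f y + real n * \<bar>x - y\<bar>) ` {0..R}"
      then obtain y where y: "y \<in> {0..R}" "z = f y + real n * \<bar>x - y\<bar>" by blast
      show "f x - e \<le> z"
      proof (cases "\<bar>x - y\<bar> < d")
        case True
        then have "dist (f y) (f x) < e" using d x y by (simp add: dist_real_def abs_minus_commute)
        then have "f y \<ge> f x - e" by (simp add: dist_real_def abs_less_iff)
        moreover have "real n * \<bar>x - y\<bar> \<ge> 0" by simp
        ultimately show ?thesis using y by linarith
      next
        case False
        have "M \<le> real N * d" using N d by (simp add: divide_le_eq)
        also have "\<dots> \<le> real n * \<bar>x - y\<bar>" using n False d by (intro mult_mono) auto
        finally have "M \<le> real n * \<bar>x - y\<bar>" .
        moreover have "f x \<le> M" using M x by blast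
        moreover have "f y \<ge> 0" using assms y by blast
        ultimately show ?thesis using y assms(4) by linarith
      qed
    qed
  qed
qed

lemma subseq_pointwise:
  fixes h :: "nat \<Rightarrow> real \<Rightarrow> real"
  assumes bdd: "\<And>n x. \<bar>h n x\<bar> \<le> B" and lip: "\<And>n x y. \<bar>h n x - h n y\<bar> \<le> L * \<bar>x - y\<bar>"
  shows "\<exists>r. strict_mono r \<and> (\<forall>x. convergent (\<lambda>k. h (r k) x))"
proof -
  obtain m :: "real \<Rightarrow> nat" where "bij_betw m \<rat> UNIV"
    using countable_rat Rats_infinite by (erule countableE_infinite)
  then obtain rr :: "nat \<Rightarrow> real" where bij: "bij_betw rr UNIV \<rat>"
    using bij_betw_inv by blast
  have dense_r: "\<And>x y. x < y \<Longrightarrow> \<exists>n. x < rr n \<and> rr n < y"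
    by (metis Rats_dense_in_real bij f_the_inv_into_f bij_betw_def)
  let ?P = "\<lambda>n. \<lambda>s. convergent (\<lambda>k. h (s k) (rr n))"
  interpret nat: subseqs ?P
  proof (unfold convergent_def, unfold subseqs_def, auto)
    fix n :: nat and s :: "nat \<Rightarrow> nat" assume s: "strict_mono s"
    have "bounded {-B..B}" using bounded_closed_interval by auto
    moreover have "\<And>k. h (s k) (rr n) \<in> {-B..B}"
      using bdd by (simp add: abs_le_iff minus_le_iff)
    ultimately have "\<exists>l s'. strict_mono s' \<and> ((\<lambda>k. h (s k) (rr n)) \<circ> s') \<longlonglongrightarrow> l"
      using compact_Icc compact_imp_seq_compact seq_compactE by metis
    thus "\<exists>s'. strict_mono (s'::nat\<Rightarrow>nat) \<and> (\<exists>l. (\<lambda>k. h (s (s' k)) (rr n)) \<longlonglongrightarrow> l)"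
      by (auto simp: comp_def)
  qed
  define d where "d = nat.diagseq"
  have subseq: "strict_mono d"
    unfolding d_def using nat.subseq_diagseq by auto
  have rat_cnv: "?P n d" for n
  proof -
    have Pn_seqseq: "?P n (nat.seqseq (Suc n))"
      by (rule nat.seqseq_holds)
    have 1: "(\<lambda>k. h ((nat.seqseq (Suc n) \<circ> (\<lambda>k. nat.fold_reduce (Suc n) k
      (Suc n + k))) k) (rr n)) = (\<lambda>k. h (nat.seqseq (Suc n) k) (rr n)) \<circ>
      (\<lambda>k. nat.fold_reduce (Suc n) k (Suc n + k))"
      by auto
    have 2: "?P n (d \<circ> ((+) (Suc n)))"
      unfolding d_def nat.diagseq_seqseq 1
      by (intro convergent_subseq_convergent Pn_seqseq nat.subseq_diagonal_rest)
    then obtain Lm where 3: "(\<lambda>na. h (d (na + Suc n)) (rr n)) \<longlonglongrightarrow> Lm"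
      by (auto simp: add.commute dest: convergentD)
    then have "(\<lambda>k. h (d k) (rr n)) \<longlonglongrightarrow> Lm"
      by (rule LIMSEQ_offset)
    then show ?thesis
      by (auto simp: convergent_def)
  qed
  have "convergent (\<lambda>k. h (d k) x)" for x
  proof -
    have "Cauchy (\<lambda>k. h (d k) x)"
    proof (unfold Cauchy_iff, intro allI impI)
      fix e :: real assume e: "e > 0"
      define del where "del = e / (4 * (\<bar>L\<bar> + 1))"
      have del: "del > 0" unfolding del_def using e by (simp add: add_pos_nonneg)
      obtain n where n: "x - del < rr n" "rr n < x + del" using dense_r[of "x - del" "x + del"] del by auto
      have xn: "\<bar>x - rr n\<bar> \<le> del" using n by auto
      have "Cauchy (\<lambda>k. h (d k) (rr n))" using rat_cnv[of n] by (simp add: Cauchy_convergent_iff)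
      then obtain M where M: "\<forall>i\<ge>M. \<forall>j\<ge>M. norm (h (d i) (rr n) - h (d j) (rr n)) < e / 2"
        unfolding Cauchy_iff using e by (meson half_gt_zero)
      have Ld: "L * \<bar>x - rr n\<bar> \<le> e / 4"
      proof -
        have "L * \<bar>x - rr n\<bar> \<le> \<bar>L\<bar> * del" using xn by (meson abs_ge_self abs_ge_zero mult_mono order_trans)
        also have "\<dots> \<le> (\<bar>L\<bar> + 1) * del" using del by (simp add: mult_right_mono)
        also have "\<dots> = e / 4" unfolding del_def by (simp add: field_simps add_pos_nonneg)
        finally show ?thesis .
      qed
      show "\<exists>M. \<forall>i\<ge>M. \<forall>j\<ge>M. norm (h (d i) x - h (d j) x) < e"
      proof (intro exI allI impI)
        fix i j assume ij: "M \<le> i" "M \<le> j"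
        have a1: "\<bar>h (d i) x - h (d i) (rr n)\<bar> \<le> e / 4" using lip[of "d i" x "rr n"] Ld by linarith
        have a2: "\<bar>h (d j) x - h (d j) (rr n)\<bar> \<le> e / 4" using lip[of "d j" x "rr n"] Ld by linarith
        have a3: "\<bar>h (d i) (rr n) - h (d j) (rr n)\<bar> < e / 2" using M ij by auto
        show "norm (h (d i) x - h (d j) x) < e" using a1 a2 a3
          by (simp add: abs_le_iff abs_less_iff; linarith)
      qed
    qed
    then show ?thesis by (simp add: Cauchy_convergent_iff)
  qed
  then show ?thesis using subseq by blast
qed

context prob begin

lemma gi_good:
  assumes "R \<ge> 0" "\<forall>y\<in>{0..R}. f y \<ge> 0"
  shows "goodg (gi f R n)"
  unfolding goodg_def
proof
  show "continuous_on {0..} (gi f R n)"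
    by (rule lipschitz_on_continuous_on[of "real n"])
       (use gi_lip[OF assms] in \<open>auto simp: lipschitz_on_def dist_real_def\<close>)
  show "\<forall>x\<ge>0. gi f R n x \<ge> 0" using gi_nonneg[OF assms] by auto
qed

lemma gi_conv:
  fixes xs :: "nat \<Rightarrow> real" and \<sigma> :: "nat \<Rightarrow> nat"
  assumes "R \<ge> 0" "goodg f" "filterlim \<sigma> at_top sequentially" "\<forall>k. xs k \<in> {0..R}" "xs \<longlonglongrightarrow> x" "x \<in> {0..R}"
  shows "(\<lambda>k. gi f R (\<sigma> k) (xs k)) \<longlonglongrightarrow> f x"
proof -
  have fc: "continuous_on {0..R} f" using assms(2) unfolding goodg_def by (rule conjE) (auto intro: continuous_on_subset)
  have f0: "\<forall>y\<in>{0..R}. f y \<ge> 0" using assms(2) unfolding goodg_def by auto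
  have 1: "(\<lambda>k. f (xs k)) \<longlonglongrightarrow> f x"
    by (rule continuous_on_tendsto_compose[OF fc assms(5) assms(6)]) (use assms(4) in auto)
  have 2: "(\<lambda>k. gi f R (\<sigma> k) (xs k) - f (xs k)) \<longlonglongrightarrow> 0"
  proof (rule LIMSEQ_I)
    fix e :: real assume e: "e > 0"
    obtain N where N: "\<forall>n\<ge>N. \<forall>x\<in>{0..R}. gi f R n x \<ge> f x - e / 2"
      using gi_approx[OF assms(1) f0 fc, of "e/2"] e by auto
    have "eventually (\<lambda>k. N \<le> \<sigma> k) sequentially" using assms(3) by (simp add: filterlim_at_top)
    then obtain no where no: "\<forall>k\<ge>no. N \<le> \<sigma> k" unfolding eventually_sequentially by blast
    show "\<exists>no. \<forall>k\<ge>no. norm (gi f R (\<sigma> k) (xs k) - f (xs k) - 0) < e"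
    proof (intro exI allI impI)
      fix k assume "no \<le> k"
      then have "gi f R (\<sigma> k) (xs k) \<ge> f (xs k) - e / 2" using N no assms(4) by blast
      moreover have "gi f R (\<sigma> k) (xs k) \<le> f (xs k)" using gi_le[OF f0] assms(4) by blast
      ultimately show "norm (gi f R (\<sigma> k) (xs k) - f (xs k) - 0) < e" using e by simp
    qed
  qed
  from tendsto_add[OF 2 1] show ?thesis by simp
qed

lemma limit_sol:
  fixes f :: "real \<Rightarrow> real" and c :: "nat \<Rightarrow> real" and u :: "nat \<Rightarrow> real \<Rightarrow> real"
  assumes f: "goodg f" and lohi: "0 \<le> lo" "lo \<le> hi" "hi \<le> R" and A: "\<forall>t\<in>{0..T}. a t \<le> A"
    and seq: "\<forall>n\<ge>N. c n \<in> {lo..hi} \<and> sol (gi f R n) (c n) (u n) \<and> phi (u n) = 0"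
  shows "\<exists>c0 u0. c0 \<in> {lo..hi} \<and> sol f c0 u0 \<and> phi u0 = 0"
proof -
  have R0: "R \<ge> 0" using lohi by simp
  have f0: "\<forall>y\<in>{0..R}. f y \<ge> 0" using f unfolding goodg_def by auto
  have fc: "continuous_on {0..R} f" using f unfolding goodg_def by (auto intro: continuous_on_subset)
  obtain Mf where Mf: "\<forall>y\<in>{0..R}. f y \<le> Mf"
  proof -
    have "bounded (f ` {0..R})" by (rule compact_imp_bounded[OF compact_continuous_image[OF fc compact_Icc]])
    then obtain M where "\<forall>z\<in>f ` {0..R}. \<bar>z\<bar> \<le> M" unfolding bounded_real by blast
    then have "\<forall>y\<in>{0..R}. f y \<le> M" by (auto simp: abs_le_iff)
    then show ?thesis using that by blast
  qed
  have "(0::real) \<in> {0..R}" using R0 by simp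
  then have Mf0: "Mf \<ge> 0" using Mf f0 by (meson order_trans)
  have "(0::real) \<in> {0..T}" using T by simp
  then have "a 0 \<ge> 0" "a 0 \<le> A" using A a_nonneg by auto
  then have A0: "A \<ge> 0" by linarith
  define B where "B = A * Mf"
  have B0: "B \<ge> 0" unfolding B_def using A0 Mf0 by simp
  have good: "goodg (gi f R n)" for n by (rule gi_good[OF R0 f0])
  have solN: "sol (gi f R n) (c n) (u n)" if "n \<ge> N" for n using seq that by blast
  have cN: "c n \<in> {lo..hi}" if "n \<ge> N" for n using seq that by blast
  have yb: "\<forall>s\<in>{0..T}. a s * gi f R n (max (u n s) 0) \<le> B" if n: "n \<ge> N" for n
  proof
    fix s assume s: "s \<in> {0..T}"
    have "u n s \<le> c n" using sol_basic(3)[OF solN[OF n] good s] .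
    then have m: "max (u n s) 0 \<in> {0..R}" using cN[OF n] lohi by auto
    have "gi f R n (max (u n s) 0) \<le> Mf" using gi_le[OF f0 m] Mf m by (meson order_trans)
    moreover have "gi f R n (max (u n s) 0) \<ge> 0" using gi_nonneg[OF R0 f0] .
    moreover have "0 \<le> a s" "a s \<le> A" using a_nonneg A s by auto
    ultimately show "a s * gi f R n (max (u n s) 0) \<le> B" unfolding B_def by (intro mult_mono) auto
  qed
  define L where "L = T * B"
  have L0: "L \<ge> 0" unfolding L_def using T B0 by simp
  have lipn: "\<bar>u n t1 - u n t2\<bar> \<le> L * \<bar>t1 - t2\<bar>" if "n \<ge> N" "t1 \<in> {0..T}" "t2 \<in> {0..T}" for n t1 t2
    unfolding L_def using sol_bound(2)[OF solN good yb] that by blast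
  have bddn: "\<bar>u n t\<bar> \<le> hi + T * B * T" if n: "n \<ge> N" and t: "t \<in> {0..T}" for n t
  proof -
    have "c n - u n t \<le> T * B * T" using sol_bound(1)[OF solN[OF n] good yb[OF n] t] .
    moreover have "u n t \<le> c n" using sol_basic(3)[OF solN[OF n] good t] .
    moreover have "c n \<in> {lo..hi}" using cN[OF n] .
    moreover have "T * B * T \<ge> 0" using T B0 by simp
    ultimately show ?thesis using lohi by (auto simp: abs_le_iff)
  qed
  define hs where "hs k x = u (k + N) (clamp T x)" for k x
  have "\<exists>r. strict_mono r \<and> (\<forall>x. convergent (\<lambda>k. hs (r k) x))"
  proof (rule subseq_pointwise[of hs "hi + T * B * T" L])
    fix n x show "\<bar>hs n x\<bar> \<le> hi + T * B * T" unfolding hs_def using bddn clamp_in T by simp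
  next
    fix n x y
    have "\<bar>hs n x - hs n y\<bar> \<le> L * \<bar>clamp T x - clamp T y\<bar>" unfolding hs_def
      using lipn clamp_in T by simp
    also have "\<dots> \<le> L * \<bar>x - y\<bar>" using L0 clamp_lip by (intro mult_left_mono)
    finally show "\<bar>hs n x - hs n y\<bar> \<le> L * \<bar>x - y\<bar>" .
  qed
  then obtain r where r: "strict_mono r" "\<forall>x. convergent (\<lambda>k. hs (r k) x)" by blast
  define \<sigma> where "\<sigma> k = r k + N" for k
  have \<sigma>N: "\<sigma> k \<ge> N" for k unfolding \<sigma>_def by simp
  have \<sigma>k: "\<sigma> k \<ge> k" for k unfolding \<sigma>_def using seq_suble[OF r(1)] by (simp add: trans_le_add1)
  have \<sigma>lim: "filterlim \<sigma> at_top sequentially"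
    unfolding filterlim_at_top eventually_sequentially using \<sigma>k le_trans by blast
  define u0 where "u0 t = lim (\<lambda>k. u (\<sigma> k) t)" for t
  have uc0: "(\<lambda>k. u (\<sigma> k) t) \<longlonglongrightarrow> u0 t" if t: "t \<in> {0..T}" for t
  proof -
    have "(\<lambda>k. hs (r k) t) = (\<lambda>k. u (\<sigma> k) t)" unfolding hs_def \<sigma>_def using clamp_id[OF t] by simp
    then have "convergent (\<lambda>k. u (\<sigma> k) t)" using r(2) by metis
    then show ?thesis unfolding u0_def by (simp add: convergent_LIMSEQ_iff)
  qed
  define c0 where "c0 = u0 0"
  have T0: "(0::real) \<in> {0..T}" using T by simp
  have cconv: "(\<lambda>k. c (\<sigma> k)) \<longlonglongrightarrow> c0"
  proof -
    have "c (\<sigma> k) = u (\<sigma> k) 0" for k using sol_basic(1)[OF solN[OF \<sigma>N] good] by simp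
    then show ?thesis using uc0[OF T0] unfolding c0_def by simp
  qed
  have c0in: "c0 \<in> {lo..hi}"
  proof -
    have "lo \<le> c0" by (rule LIMSEQ_le_const[OF cconv]) (use cN \<sigma>N in auto)
    moreover have "c0 \<le> hi" by (rule LIMSEQ_le_const2[OF cconv]) (use cN \<sigma>N in auto)
    ultimately show ?thesis by simp
  qed
  have u0lip: "\<bar>u0 t1 - u0 t2\<bar> \<le> L * \<bar>t1 - t2\<bar>" if "t1 \<in> {0..T}" "t2 \<in> {0..T}" for t1 t2
  proof -
    have "(\<lambda>k. \<bar>u (\<sigma> k) t1 - u (\<sigma> k) t2\<bar>) \<longlonglongrightarrow> \<bar>u0 t1 - u0 t2\<bar>"
      by (intro tendsto_rabs tendsto_diff uc0 that)
    then show ?thesis by (rule LIMSEQ_le_const2) (use lipn \<sigma>N that in auto)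
  qed
  have u0c: "continuous_on {0..T} u0"
    by (rule lipschitz_on_continuous_on[of L])
       (use u0lip L0 in \<open>auto simp: lipschitz_on_def dist_real_def\<close>)
  have u0hi: "u0 s \<le> hi" if s: "s \<in> {0..T}" for s
  proof (rule LIMSEQ_le_const2[OF uc0[OF s]])
    have "u (\<sigma> k) s \<le> hi" for k
      using sol_basic(3)[OF solN[OF \<sigma>N] good s, of k] cN[OF \<sigma>N, of k] by auto
    then show "\<exists>N. \<forall>n\<ge>N. u (\<sigma> n) s \<le> hi" by blast
  qed
  define y0 where "y0 s = a s * f (max (u0 s) 0)" for s
  define yk where "yk k s = a s * gi f R (\<sigma> k) (max (u (\<sigma> k) s) 0)" for k s
  have ykc: "continuous_on {0..T} (yk k)" for k
    unfolding yk_def using y_cont solN[OF \<sigma>N] good unfolding sol_def by blast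
  have ykb: "0 \<le> yk k s \<and> yk k s \<le> B" if "s \<in> {0..T}" for k s
    using yb[OF \<sigma>N] y_nonneg[OF good that] that unfolding yk_def by auto
  have ypt: "(\<lambda>k. yk k s) \<longlonglongrightarrow> y0 s" if s: "s \<in> {0..T}" for s
  proof -
    have "(\<lambda>k. gi f R (\<sigma> k) (max (u (\<sigma> k) s) 0)) \<longlonglongrightarrow> f (max (u0 s) 0)"
    proof (rule gi_conv[OF R0 f \<sigma>lim])
      show "\<forall>k. max (u (\<sigma> k) s) 0 \<in> {0..R}"
      proof
        fix k
        have "u (\<sigma> k) s \<le> c (\<sigma> k)" "c (\<sigma> k) \<in> {lo..hi}"
          using sol_basic(3)[OF solN[OF \<sigma>N] good s] cN[OF \<sigma>N] by auto
        then show "max (u (\<sigma> k) s) 0 \<in> {0..R}" using lohi by auto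
      qed
      show "(\<lambda>k. max (u (\<sigma> k) s) 0) \<longlonglongrightarrow> max (u0 s) 0" by (intro tendsto_max uc0 s tendsto_const)
      show "max (u0 s) 0 \<in> {0..R}" using u0hi[OF s] lohi by auto
    qed
    then show ?thesis unfolding yk_def y0_def by (intro tendsto_mult tendsto_const)
  qed
  have Wconv: "(\<lambda>k. W (yk k) t) \<longlonglongrightarrow> W y0 t" if t: "t \<in> {0..T}" for t
    unfolding W_def
  proof (rule dominated_convergence(2))
    fix k show "(\<lambda>s. (t - s) * yk k s) integrable_on {0..t}"
      using ykc[of k] t cont_sub by (intro integrable_continuous_real continuous_intros) (auto intro: cont_sub)
  next
    show "(\<lambda>s. T * B) integrable_on {0..t}" by (intro integrable_continuous_real continuous_intros)
  next
    fix k s assume s: "s \<in> {0..t}"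
    then have sT: "s \<in> {0..T}" using t by auto
    have "\<bar>t - s\<bar> \<le> T" using s t by auto
    then have "\<bar>t - s\<bar> * \<bar>yk k s\<bar> \<le> T * B" using ykb[OF sT] by (intro mult_mono) auto
    then show "norm ((t - s) * yk k s) \<le> T * B" by (simp add: abs_mult)
  next
    fix s assume s: "s \<in> {0..t}"
    then have sT: "s \<in> {0..T}" using t by auto
    show "(\<lambda>k. (t - s) * yk k s) \<longlonglongrightarrow> (t - s) * y0 s" by (intro tendsto_mult tendsto_const ypt sT)
  qed
  have eq0: "u0 t = c0 - W y0 t" if t: "t \<in> {0..T}" for t
  proof -
    have "u (\<sigma> k) t = c (\<sigma> k) - W (yk k) t" for k
      using solN[OF \<sigma>N] t unfolding sol_def yk_def by blast
    then have "(\<lambda>k. u (\<sigma> k) t) \<longlonglongrightarrow> c0 - W y0 t" using tendsto_diff[OF cconv Wconv[OF t]] by simp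
    then show ?thesis using uc0[OF t] LIMSEQ_unique by blast
  qed
  have y0eq: "y0 = (\<lambda>s. a s * f (max (u0 s) 0))" by (rule ext) (simp add: y0_def)
  have sol0: "sol f c0 u0" unfolding sol_def using u0c eq0 unfolding y0eq by simp
  have phi0: "phi u0 = 0"
  proof -
    have uck: "continuous_on {0..T} (u (\<sigma> k))" for k using solN[OF \<sigma>N] unfolding sol_def by blast
    have ic: "(\<lambda>k. integral {0..\<eta>} (u (\<sigma> k))) \<longlonglongrightarrow> integral {0..\<eta>} u0"
    proof (rule dominated_convergence(2))
      fix k show "u (\<sigma> k) integrable_on {0..\<eta>}"
        using uck[of k] eta by (intro integrable_continuous_real) (auto intro: cont_sub)
    next
      show "(\<lambda>s. hi + T * B * T) integrable_on {0..\<eta>}" by (intro integrable_continuous_real continuous_intros)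
    next
      fix k s assume s: "s \<in> {0..\<eta>}"
      then show "norm (u (\<sigma> k) s) \<le> hi + T * B * T" using bddn[OF \<sigma>N] eta by auto
    next
      fix s assume s: "s \<in> {0..\<eta>}"
      then show "(\<lambda>k. u (\<sigma> k) s) \<longlonglongrightarrow> u0 s" using uc0 eta by auto
    qed
    have TT: "T \<in> {0..T}" using T by simp
    have "(\<lambda>k. phi (u (\<sigma> k))) \<longlonglongrightarrow> phi u0"
      unfolding phi_def by (intro tendsto_diff tendsto_mult tendsto_const uc0[OF TT] ic)
    moreover have "(\<lambda>k. phi (u (\<sigma> k))) = (\<lambda>k. 0)" using seq \<sigma>N by auto
    ultimately show ?thesis using LIMSEQ_unique by (metis tendsto_const)
  qed
  show ?thesis using c0in sol0 phi0 by blast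
qed

end

context prob begin

lemma shoot:
  fixes g :: "real \<Rightarrow> real"
  assumes g: "goodg g" and glip: "\<forall>x y. \<bar>g x - g y\<bar> \<le> L * \<bar>x - y\<bar>" "L \<ge> 0"
    and A: "\<forall>t\<in>{0..T}. a t \<le> A" and lh: "lo \<le> hi"
    and sgn: "\<forall>u v. sol g lo u \<longrightarrow> sol g hi v \<longrightarrow> (phi u \<le> 0 \<and> 0 \<le> phi v) \<or> (phi v \<le> 0 \<and> 0 \<le> phi u)"
  shows "\<exists>c u. c \<in> {lo..hi} \<and> sol g c u \<and> phi u = 0"
proof -
  have lip': "\<forall>x y. \<bar>g (max x 0) - g (max y 0)\<bar> \<le> L * \<bar>x - y\<bar>"
  proof (intro allI)
    fix x y :: real
    have "\<bar>g (max x 0) - g (max y 0)\<bar> \<le> L * \<bar>max x 0 - max y 0\<bar>" using glip by blast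
    also have "\<dots> \<le> L * \<bar>x - y\<bar>" using glip(2) by (intro mult_left_mono) (auto simp: abs_if max_def)
    finally show "\<bar>g (max x 0) - g (max y 0)\<bar> \<le> L * \<bar>x - y\<bar>" .
  qed
  obtain S K where S: "\<forall>c. continuous_on {0..T} (S c) \<and> (\<forall>t\<in>{0..T}. S c t = c - W (\<lambda>s. a s * g (max (S c s) 0)) t)"
    and SK: "\<forall>c d t. t \<in> {0..T} \<longrightarrow> \<bar>S c t - S d t\<bar> \<le> K * \<bar>c - d\<bar>"
    using ivp[OF lip' glip(2) A] by blast
  have solS: "sol g c (S c)" for c unfolding sol_def using S by blast
  define K' where "K' = \<bar>K\<bar> + \<alpha> * (\<eta> * \<bar>K\<bar>)"
  have K'0: "K' \<ge> 0" unfolding K'_def using alpha eta by simp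
  have plip: "\<bar>phi (S c) - phi (S d)\<bar> \<le> K' * \<bar>c - d\<bar>" for c d
  proof -
    have SK': "\<bar>S c t - S d t\<bar> \<le> \<bar>K\<bar> * \<bar>c - d\<bar>" if "t \<in> {0..T}" for t
      using SK that by (meson abs_ge_self abs_ge_zero mult_right_mono order_trans)
    have ic: "S c integrable_on {0..\<eta>}" "S d integrable_on {0..\<eta>}"
      using S eta by (auto intro!: integrable_continuous_real intro: cont_sub)
    have "\<bar>integral {0..\<eta>} (S c) - integral {0..\<eta>} (S d)\<bar> = norm (integral {0..\<eta>} (\<lambda>t. S c t - S d t))"
      using integral_diff[OF ic] by simp
    also have "\<dots> \<le> integral {0..\<eta>} (\<lambda>t. \<bar>K\<bar> * \<bar>c - d\<bar>)"
      by (rule integral_norm_bound_integral) (use integrable_diff[OF ic] SK' eta in auto)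
    also have "\<dots> = \<eta> * (\<bar>K\<bar> * \<bar>c - d\<bar>)" using eta by (simp add: integral_const_real)
    finally have i: "\<bar>integral {0..\<eta>} (S c) - integral {0..\<eta>} (S d)\<bar> \<le> \<eta> * (\<bar>K\<bar> * \<bar>c - d\<bar>)" .
    have TT: "T \<in> {0..T}" using T by simp
    have "\<bar>phi (S c) - phi (S d)\<bar> \<le> \<bar>S c T - S d T\<bar> + \<alpha> * \<bar>integral {0..\<eta>} (S c) - integral {0..\<eta>} (S d)\<bar>"
    proof -
      define P where "P = integral {0..\<eta>} (S c)"
      define Q where "Q = integral {0..\<eta>} (S d)"
      have "\<bar>\<alpha> * P - \<alpha> * Q\<bar> = \<alpha> * \<bar>P - Q\<bar>" using alpha
        by (simp add: abs_mult right_diff_distrib[symmetric])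
      moreover have "\<bar>(S c T - S d T) - (\<alpha> * P - \<alpha> * Q)\<bar> \<le> \<bar>S c T - S d T\<bar> + \<bar>\<alpha> * P - \<alpha> * Q\<bar>"
        by (rule abs_triangle_ineq4)
      ultimately show ?thesis unfolding phi_def P_def[symmetric] Q_def[symmetric]
        by (simp add: algebra_simps)
    qed
    also have "\<dots> \<le> \<bar>K\<bar> * \<bar>c - d\<bar> + \<alpha> * (\<eta> * (\<bar>K\<bar> * \<bar>c - d\<bar>))"
      using SK'[OF TT] i alpha by (intro add_mono mult_left_mono) auto
    also have "\<dots> = K' * \<bar>c - d\<bar>" unfolding K'_def by (simp add: algebra_simps)
    finally show ?thesis .
  qed
  have pc: "continuous_on {lo..hi} (\<lambda>c. phi (S c))"
    by (rule lipschitz_on_continuous_on[of K']) (use plip K'0 in \<open>auto simp: lipschitz_on_def dist_real_def\<close>)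
  from sgn solS have "(phi (S lo) \<le> 0 \<and> 0 \<le> phi (S hi)) \<or> (phi (S hi) \<le> 0 \<and> 0 \<le> phi (S lo))" by blast
  then obtain c where c: "lo \<le> c" "c \<le> hi" "phi (S c) = 0"
  proof
    assume "phi (S lo) \<le> 0 \<and> 0 \<le> phi (S hi)"
    then show ?thesis using IVT'[of "\<lambda>c. phi (S c)" lo 0 hi] lh pc that by auto
  next
    assume "phi (S hi) \<le> 0 \<and> 0 \<le> phi (S lo)"
    then show ?thesis using IVT2'[of "\<lambda>c. phi (S c)" hi 0 lo] lh pc that by auto
  qed
  then show ?thesis using solS by auto
qed

end

context prob begin

lemma gam_pos: "gam T \<eta> \<alpha> > 0"
  unfolding gam_def using gam_facts(1) alpha eta by (intro divide_pos_pos) auto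

lemma final_props:
  fixes f u :: "real \<Rightarrow> real"
  assumes f: "goodg f" and s: "sol f c u" and p: "phi u = 0" and c: "c > 0"
  shows "pos_solution T \<eta> \<alpha> a f u" "supnorm T u = c"
proof -
  have uT: "u T \<ge> gam T \<eta> \<alpha> * c" using cone[OF s f] p by simp
  have "gam T \<eta> \<alpha> * c > 0" using gam_pos c by simp
  then have uTp: "u T > 0" using uT by linarith
  have upos: "u t > 0" if t: "t \<in> {0..T}" for t
    using sol_basic(2)[OF s f, of t T] t uTp by auto
  have ule: "u t \<le> c" if t: "t \<in> {0..T}" for t using sol_basic(3)[OF s f t] .
  have u0: "u 0 = c" using sol_basic(1)[OF s f] .
  define y where "y s = a s * f (max (u s) 0)" for s
  have yeq: "y = (\<lambda>s. a s * f (max (u s) 0))" by (rule ext) (simp add: y_def)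
  have uc: "continuous_on {0..T} u" using s unfolding sol_def by blast
  have yc: "continuous_on {0..T} y" unfolding yeq by (rule y_cont[OF uc f])
  have eq: "\<And>t. t \<in> {0..T} \<Longrightarrow> u t = c - W y t" using s unfolding sol_def yeq by blast
  have C2: "C2_with T u (\<lambda>t. - integral {0..t} y) (\<lambda>t. - y t)"
    unfolding C2_with_def
  proof (intro conjI ballI)
    fix t assume t: "t \<in> {0..T}"
    have "((\<lambda>t. c - W y t) has_real_derivative 0 - integral {0..t} y) (at t within {0..T})"
      by (rule DERIV_diff[OF DERIV_const W_deriv[OF yc t]])
    then have "((\<lambda>t. c - W y t) has_real_derivative - integral {0..t} y) (at t within {0..T})" by simp
    then show "(u has_real_derivative - integral {0..t} y) (at t within {0..T})"
      by (rule has_field_derivative_transform_within[OF _ zero_less_one t]) (use eq in auto)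
  next
    fix t assume t: "t \<in> {0..T}"
    show "((\<lambda>t. - integral {0..t} y) has_real_derivative - y t) (at t within {0..T})"
      by (rule DERIV_minus[OF integral_has_real_derivative[OF yc t]])
  next
    show "continuous_on {0..T} (\<lambda>t. - y t)" using yc by (intro continuous_intros)
  qed
  have ode: "\<forall>t\<in>{0<..<T}. - y t + a t * f (u t) = 0"
  proof
    fix t assume t: "t \<in> {0<..<T}"
    then have "u t > 0" using upos by auto
    then show "- y t + a t * f (u t) = 0" unfolding y_def by simp
  qed
  have bc: "u T = \<alpha> * integral {0..\<eta>} u" using p unfolding phi_def by simp
  have ex: "\<exists>u1 u2. C2_with T u u1 u2 \<and> (\<forall>t\<in>{0<..<T}. u2 t + a t * f (u t) = 0) \<and> u1 0 = 0 \<and>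
        u T = \<alpha> * integral {0..\<eta>} u"
    apply (rule exI[of _ "\<lambda>t. - integral {0..t} y"], rule exI[of _ "\<lambda>t. - y t"])
    using C2 ode bc by simp
  have nn: "\<forall>t\<in>{0..T}. u t \<ge> 0" using upos by (simp add: less_imp_le)
  have nz: "\<exists>t\<in>{0..T}. u t \<noteq> 0" using u0 c T by (intro bexI[of _ 0]) auto
  show "pos_solution T \<eta> \<alpha> a f u" unfolding pos_solution_def using ex nn nz by blast
  show "supnorm T u = c" unfolding supnorm_def
  proof (rule cSup_eq_maximum)
    show "c \<in> (\<lambda>t. \<bar>u t\<bar>) ` {0..T}" using u0 c T by (intro rev_image_eqI[of 0]) auto
    fix x assume "x \<in> (\<lambda>t. \<bar>u t\<bar>) ` {0..T}"
    then obtain t where "t \<in> {0..T}" "x = \<bar>u t\<bar>" by blast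
    then show "x \<le> c" using upos ule by (simp add: less_imp_le)
  qed
qed

lemma Ia_pos:
  assumes "\<exists>t0\<in>{0..T}. a t0 > 0"
  shows "Ia > 0"
proof -
  obtain t0 where t0: "t0 \<in> {0..T}" "a t0 > 0" using assms by blast
  define h1 where "h1 s = (T - s) * a s" for s
  define h2 where "h2 s = (2 * (T - \<eta>) + \<alpha> * (\<eta>^2 - s^2)) * a s" for s
  have acT: "continuous_on {\<eta>..T} a" using a_cont eta by (auto intro: cont_sub)
  have ace: "continuous_on {0..\<eta>} a" using a_cont eta by (auto intro: cont_sub)
  have h1c: "continuous_on {\<eta>..T} h1" unfolding h1_def using acT by (intro continuous_intros)
  have h2c: "continuous_on {0..\<eta>} h2" unfolding h2_def using ace by (intro continuous_intros)
  have h1n: "h1 s \<ge> 0" if "s \<in> {\<eta>..T}" for s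
    unfolding h1_def using that a_nonneg eta by (intro mult_nonneg_nonneg) auto
  have k2: "2 * (T - \<eta>) + \<alpha> * (\<eta>^2 - s^2) > 0" if "s \<in> {0..\<eta>}" for s
  proof -
    have "s^2 \<le> \<eta>^2" using that by (intro power_mono) auto
    then have "\<alpha> * (\<eta>^2 - s^2) \<ge> 0" using alpha by simp
    moreover have "2 * (T - \<eta>) > 0" using eta by simp
    ultimately show ?thesis by (intro add_pos_nonneg)
  qed
  have h2n: "h2 s \<ge> 0" if "s \<in> {0..\<eta>}" for s
    unfolding h2_def using that a_nonneg eta k2[OF that] by (intro mult_nonneg_nonneg) auto
  have I1: "integral {\<eta>..T} h1 \<ge> 0" using h1n by (intro integral_nonneg integrable_continuous_real h1c) auto
  have I2: "integral {0..\<eta>} h2 \<ge> 0" using h2n by (intro integral_nonneg integrable_continuous_real h2c) auto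
  have Iaeq: "Ia = integral {\<eta>..T} h1 + 1/2 * integral {0..\<eta>} h2"
    unfolding Ia_def h1_def h2_def by simp
  show ?thesis
  proof (cases "t0 \<le> \<eta>")
    case True
    have "integral {0..\<eta>} h2 \<noteq> 0"
    proof
      assume z: "integral {0..\<eta>} h2 = 0"
      have "(h2 has_integral 0) (cbox 0 \<eta>)"
        using integrable_integral[OF integrable_continuous_real[OF h2c]] z by simp
      then have "h2 t0 = 0"
        by (intro has_integral_0_cbox_imp_0[of 0 \<eta> h2 t0]) (use h2c h2n eta True t0 in auto)
      moreover have "h2 t0 > 0" unfolding h2_def using k2[of t0] True t0 by auto
      ultimately show False by simp
    qed
    then show ?thesis using I1 I2 Iaeq by linarith
  next
    case False
    have "integral {\<eta>..T} h1 \<noteq> 0"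
    proof
      assume z: "integral {\<eta>..T} h1 = 0"
      have "(h1 has_integral 0) (cbox \<eta> T)"
        using integrable_integral[OF integrable_continuous_real[OF h1c]] z by simp
      then have h10: "h1 s = 0" if "s \<in> {\<eta>..T}" for s
        by (intro has_integral_0_cbox_imp_0[of \<eta> T h1 s]) (use h1c h1n eta that in auto)
      have "a s = 0" if "s \<in> {\<eta>..<T}" for s using h10[of s] that unfolding h1_def by auto
      moreover have "continuous_on (closure {\<eta>..<T}) a" using acT closure_atLeastLessThan[OF eta(2)] by simp
      moreover have "t0 \<in> closure {\<eta>..<T}" using closure_atLeastLessThan[OF eta(2)] False t0 by auto
      ultimately have "a t0 = 0" using continuous_constant_on_closure by blast
      then show False using t0 by simp
    qed
    then show ?thesis using I1 I2 Iaeq by linarith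
  qed
qed

end

context prob begin

lemma two_solutions:
  fixes f :: "real \<Rightarrow> real"
  assumes f: "goodg f"
    and f0: "((\<lambda>u. f u / u) \<longlongrightarrow> 0) (at_right 0)"
    and finf: "((\<lambda>u. f u / u) \<longlongrightarrow> 0) at_top"
    and Ipos: "Ia > 0" and rho: "\<rho>2 > 0"
    and M2: "M2 * (gam T \<eta> \<alpha> * Ia) \<ge> 1 - \<alpha> * \<eta>"
    and cond: "\<forall>u\<in>{gam T \<eta> \<alpha> * \<rho>2..\<rho>2}. f u \<ge> M2 * \<rho>2"
  shows "\<exists>c1 u1 c2 u2. sol f c1 u1 \<and> phi u1 = 0 \<and> 0 < c1 \<and> c1 < \<rho>2 \<and>
                      sol f c2 u2 \<and> phi u2 = 0 \<and> \<rho>2 < c2"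
proof -
  have ae: "1 - \<alpha> * \<eta> > 0" using alpha by simp
  obtain A where A: "\<forall>t\<in>{0..T}. a t \<le> A"
  proof -
    have "bounded (a ` {0..T})" by (rule compact_imp_bounded[OF compact_continuous_image[OF a_cont compact_Icc]])
    then obtain M where "\<forall>z\<in>a ` {0..T}. \<bar>z\<bar> \<le> M" unfolding bounded_real by blast
    then have "\<forall>t\<in>{0..T}. a t \<le> M" by (auto simp: abs_le_iff)
    then show ?thesis using that by blast
  qed
  have "(0::real) \<in> {0..T}" using T by simp
  then have "a 0 \<ge> 0" "a 0 \<le> A" using A a_nonneg by auto
  then have A0: "A \<ge> 0" by linarith
  define TTA where "TTA = T * T * A"
  have TTA0: "TTA \<ge> 0" unfolding TTA_def using A0 by simp
  define \<epsilon> where "\<epsilon> = (1 - \<alpha> * \<eta>) / (2 * (TTA + 1))"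
  have eps: "\<epsilon> > 0" unfolding \<epsilon>_def using ae TTA0 by simp
  have epsb: "TTA * \<epsilon> \<le> (1 - \<alpha> * \<eta>) / 2"
  proof -
    have "TTA * \<epsilon> = (1 - \<alpha> * \<eta>) / 2 * (TTA / (TTA + 1))" unfolding \<epsilon>_def using TTA0 by (simp add: field_simps)
    also have "\<dots> \<le> (1 - \<alpha> * \<eta>) / 2 * 1" using ae TTA0 by (intro mult_left_mono) auto
    finally show ?thesis by simp
  qed
  have fc: "continuous_on {0..} f" and fnn: "\<forall>x\<ge>0. f x \<ge> 0" using f unfolding goodg_def by auto
  have fz: "f 0 = 0"
  proof -
    have "((\<lambda>u. f u / u * u) \<longlongrightarrow> 0 * 0) (at_right 0)"
      by (intro tendsto_mult f0 tendsto_ident_at)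
    then have lim: "((\<lambda>u. f u / u * u) \<longlongrightarrow> 0) (at_right 0)" by simp
    have ev: "eventually (\<lambda>u. f u / u * u = f u) (at_right (0::real))"
      unfolding eventually_at_filter by (rule always_eventually) auto
    have 1: "(f \<longlongrightarrow> 0) (at_right 0)" using tendsto_cong[OF ev] lim by blast
    have "continuous (at 0 within {0..}) f" using fc continuous_on_eq_continuous_within by force
    then have "(f \<longlongrightarrow> f 0) (at 0 within {0..})" by (simp add: continuous_within)
    then have 2: "(f \<longlongrightarrow> f 0) (at_right 0)" by (rule tendsto_within_subset) auto
    show ?thesis using tendsto_unique[OF trivial_limit_at_right_real 2 1] .
  qed
  obtain \<delta>0 where \<delta>0: "\<delta>0 > 0" "\<forall>x. 0 < x \<and> x < \<delta>0 \<longrightarrow> f x \<le> \<epsilon> * x"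
  proof -
    from f0 eps have "eventually (\<lambda>u. \<bar>f u / u\<bar> < \<epsilon>) (at_right 0)"
      by (auto simp: tendsto_iff dist_real_def)
    then obtain b where b: "b > 0" "\<forall>y>0. y < b \<longrightarrow> \<bar>f y / y\<bar> < \<epsilon>"
      unfolding eventually_at_right_field by auto
    have "\<forall>x. 0 < x \<and> x < b \<longrightarrow> f x \<le> \<epsilon> * x"
    proof (intro allI impI)
      fix x assume x: "0 < x \<and> x < b"
      then have "\<bar>f x / x\<bar> < \<epsilon>" using b by blast
      then have "f x / x < \<epsilon>" by linarith
      then show "f x \<le> \<epsilon> * x" using x by (simp add: divide_less_eq less_imp_le)
    qed
    then show ?thesis using that b by blast
  qed
  define lo where "lo = min (\<delta>0 / 2) (\<rho>2 / 2)"
  have lo: "0 < lo" "lo < \<rho>2" "lo < \<delta>0" unfolding lo_def using \<delta>0 rho by auto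
  obtain R0 where R0: "R0 \<ge> 1" "\<forall>x\<ge>R0. f x \<le> \<epsilon> * x"
  proof -
    from finf eps have "eventually (\<lambda>u. \<bar>f u / u\<bar> < \<epsilon>) at_top"
      by (auto simp: tendsto_iff dist_real_def)
    then obtain N where N: "\<forall>n\<ge>N. \<bar>f n / n\<bar> < \<epsilon>" unfolding eventually_at_top_linorder by auto
    have "\<forall>x\<ge>max N 1. f x \<le> \<epsilon> * x"
    proof (intro allI impI)
      fix x assume x: "x \<ge> max N 1"
      then have "x \<ge> N" by simp
      then have "\<bar>f x / x\<bar> < \<epsilon>" using N by blast
      then have "f x / x < \<epsilon>" by linarith
      then show "f x \<le> \<epsilon> * x" using x by (simp add: divide_less_eq less_imp_le)
    qed
    moreover have "max N 1 \<ge> 1" by simp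
    ultimately show ?thesis using that by blast
  qed
  obtain Mf0 where Mf0: "\<forall>x\<in>{0..R0}. f x \<le> Mf0"
  proof -
    have fcR: "continuous_on {0..R0} f" using fc by (rule continuous_on_subset) auto
    have "bounded (f ` {0..R0})" by (rule compact_imp_bounded[OF compact_continuous_image[OF fcR compact_Icc]])
    then obtain M where "\<forall>z\<in>f ` {0..R0}. \<bar>z\<bar> \<le> M" unfolding bounded_real by blast
    then have "\<forall>x\<in>{0..R0}. f x \<le> M" by (auto simp: abs_le_iff)
    then show ?thesis using that by blast
  qed
  have "(0::real) \<in> {0..R0}" using R0 by simp
  then have "f 0 \<le> Mf0" using Mf0 by blast
  then have Mf00: "Mf0 \<ge> 0" using fz by simp
  have fbig: "f x \<le> \<epsilon> * x + Mf0" if "x \<ge> 0" for x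
  proof (cases "x \<le> R0")
    case True
    then have "f x \<le> Mf0" using Mf0 that by auto
    moreover have "\<epsilon> * x \<ge> 0" using eps that by simp
    ultimately show ?thesis by linarith
  next
    case False
    then have "f x \<le> \<epsilon> * x" using R0 by auto
    then show ?thesis using Mf00 by linarith
  qed
  define R where "R = max (2 * \<rho>2) (4 * TTA * Mf0 / (1 - \<alpha> * \<eta>)) + 1"
  have R1: "R > \<rho>2" unfolding R_def using rho by auto
  have R2: "R * (1 - \<alpha> * \<eta>) / 2 > TTA * Mf0"
  proof -
    have "R > 4 * TTA * Mf0 / (1 - \<alpha> * \<eta>)" unfolding R_def by auto
    then have "R * (1 - \<alpha> * \<eta>) > 4 * TTA * Mf0" using ae by (simp add: divide_less_eq)
    moreover have "TTA * Mf0 \<ge> 0" using TTA0 Mf00 by simp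
    ultimately show ?thesis by linarith
  qed
  have R0': "R \<ge> 0" using R1 rho by simp
  have f0R: "\<forall>y\<in>{0..R}. f y \<ge> 0" using fnn by auto
  have fcR: "continuous_on {0..R} f" using fc by (rule continuous_on_subset) auto
  have gp: "gam T \<eta> \<alpha> > 0" "gam T \<eta> \<alpha> < 1" using gam_pos gam_facts by auto
  have M2I: "M2 * Ia * gam T \<eta> \<alpha> \<ge> 1 - \<alpha> * \<eta>" using M2 by (simp add: mult_ac)
  have "(1 - \<alpha> * \<eta>) * gam T \<eta> \<alpha> < (1 - \<alpha> * \<eta>) * 1" using ae gp by (intro mult_strict_left_mono) auto
  then have "(1 - \<alpha> * \<eta>) * gam T \<eta> \<alpha> < M2 * Ia * gam T \<eta> \<alpha>" using M2I
    by (metis mult.right_neutral less_le_trans)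
  then have MI: "M2 * Ia > 1 - \<alpha> * \<eta>" using gp by (simp add: mult_less_cancel_right)
  have MIr: "M2 * \<rho>2 * Ia > \<rho>2 * (1 - \<alpha> * \<eta>)"
    using mult_strict_left_mono[OF MI rho] by (simp add: mult_ac)
  define s0 where "s0 = M2 * \<rho>2 * Ia - \<rho>2 * (1 - \<alpha> * \<eta>)"
  have s0: "s0 > 0" unfolding s0_def using MIr by simp
  define e where "e = s0 / (2 * Ia)"
  have e: "e > 0" unfolding e_def using s0 Ipos by simp
  define m where "m = M2 * \<rho>2 - e"
  have mI: "m * Ia > \<rho>2 * (1 - \<alpha> * \<eta>)"
  proof -
    have "m * Ia = M2 * \<rho>2 * Ia - s0 / 2" unfolding m_def e_def using Ipos by (simp add: field_simps)
    moreover have "M2 * \<rho>2 * Ia = \<rho>2 * (1 - \<alpha> * \<eta>) + s0" unfolding s0_def by simp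
    ultimately show ?thesis using s0 by linarith
  qed
  have m0: "m \<ge> 0"
  proof (rule ccontr)
    assume "\<not> m \<ge> 0"
    then have "m * Ia < 0" using Ipos by (simp add: mult_neg_pos)
    moreover have "\<rho>2 * (1 - \<alpha> * \<eta>) > 0" using rho ae by simp
    ultimately show False using mI by linarith
  qed
  obtain N where N: "\<forall>n\<ge>N. \<forall>x\<in>{0..R}. gi f R n x \<ge> f x - e"
    using gi_approx[OF R0' f0R fcR e] by blast
  have good: "goodg (gi f R n)" for n by (rule gi_good[OF R0' f0R])
  have glip: "\<forall>x y. \<bar>gi f R n x - gi f R n y\<bar> \<le> real n * \<bar>x - y\<bar>" for n
    using gi_lip[OF R0' f0R] by blast
  have gle: "gi f R n x \<le> f x" if "x \<in> {0..R}" for n x using gi_le[OF f0R that] .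
  have at_lo: "phi u > 0" if s: "sol (gi f R n) lo u" for n u
  proof -
    have b: "\<forall>x\<in>{0..lo}. gi f R n x \<le> \<epsilon> * lo"
    proof
      fix x assume x: "x \<in> {0..lo}"
      then have xR: "x \<in> {0..R}" using lo R1 by auto
      have "f x \<le> \<epsilon> * lo"
      proof (cases "x = 0")
        case True then show ?thesis using fz eps lo by simp
      next
        case False
        then have "f x \<le> \<epsilon> * x" using \<delta>0 x lo by auto
        also have "\<dots> \<le> \<epsilon> * lo" using x eps by (intro mult_left_mono) auto
        finally show ?thesis .
      qed
      then show "gi f R n x \<le> \<epsilon> * lo" using gle[OF xR, where n=n] by linarith
    qed
    define X where "X = T * (A * (\<epsilon> * lo)) * T"
    define Q where "Q = lo * (1 - \<alpha> * \<eta>)"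
    have p: "phi u \<ge> Q - X" unfolding Q_def X_def
      using phi_lower[OF s good _ b A] lo by simp
    have "X = (TTA * \<epsilon>) * lo" unfolding TTA_def X_def by (simp add: mult_ac)
    also have "\<dots> \<le> (1 - \<alpha> * \<eta>) / 2 * lo" using epsb lo by (intro mult_right_mono) auto
    also have "\<dots> = Q / 2" unfolding Q_def by simp
    finally have "X \<le> Q / 2" .
    moreover have "Q > 0" unfolding Q_def using lo ae by simp
    ultimately show ?thesis using p by linarith
  qed
  have at_R: "phi u > 0" if s: "sol (gi f R n) R u" for n u
  proof -
    have b: "\<forall>x\<in>{0..R}. gi f R n x \<le> \<epsilon> * R + Mf0"
    proof
      fix x assume x: "x \<in> {0..R}"
      have "gi f R n x \<le> f x" using gle[OF x, where n=n] .
      also have "\<dots> \<le> \<epsilon> * x + Mf0" using fbig x by auto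
      also have "\<dots> \<le> \<epsilon> * R + Mf0" using x eps by (simp add: mult_left_mono)
      finally show "gi f R n x \<le> \<epsilon> * R + Mf0" .
    qed
    define X where "X = T * (A * (\<epsilon> * R + Mf0)) * T"
    define Q where "Q = R * (1 - \<alpha> * \<eta>)"
    have p: "phi u \<ge> Q - X" unfolding Q_def X_def
      using phi_lower[OF s good R0' b A] .
    have "X = (TTA * \<epsilon>) * R + TTA * Mf0" unfolding TTA_def X_def
      by (simp add: algebra_simps)
    moreover have "(TTA * \<epsilon>) * R \<le> (1 - \<alpha> * \<eta>) / 2 * R" using epsb R0' by (intro mult_right_mono) auto
    moreover have "(1 - \<alpha> * \<eta>) / 2 * R = Q / 2" unfolding Q_def by simp
    moreover have "Q / 2 > TTA * Mf0" using R2 unfolding Q_def by simp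
    ultimately show ?thesis using p by linarith
  qed
  have at_rho: "phi u < 0" if n: "n \<ge> N" and s: "sol (gi f R n) \<rho>2 u" for n u
  proof (rule rho_neg[OF s good rho m0 _ mI])
    show "\<forall>x\<in>{gam T \<eta> \<alpha> * \<rho>2..\<rho>2}. m \<le> gi f R n x"
    proof
      fix x assume x: "x \<in> {gam T \<eta> \<alpha> * \<rho>2..\<rho>2}"
      have "gam T \<eta> \<alpha> * \<rho>2 \<ge> 0" using gp rho by simp
      then have xR: "x \<in> {0..R}" using x R1 by auto
      have "gi f R n x \<ge> f x - e" using N n xR by blast
      moreover have "f x \<ge> M2 * \<rho>2" using cond x by blast
      ultimately show "m \<le> gi f R n x" unfolding m_def by linarith
    qed
  qed
  have seq1: "\<forall>n\<ge>N. \<exists>c u. c \<in> {lo..\<rho>2} \<and> sol (gi f R n) c u \<and> phi u = 0"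
  proof (intro allI impI)
    fix n assume n: "n \<ge> N"
    show "\<exists>c u. c \<in> {lo..\<rho>2} \<and> sol (gi f R n) c u \<and> phi u = 0"
    proof -
      have sg: "\<forall>u v. sol (gi f R n) lo u \<longrightarrow> sol (gi f R n) \<rho>2 v \<longrightarrow>
          (phi u \<le> 0 \<and> 0 \<le> phi v) \<or> (phi v \<le> 0 \<and> 0 \<le> phi u)"
      proof (intro allI impI)
        fix u v assume "sol (gi f R n) lo u" "sol (gi f R n) \<rho>2 v"
        then have "phi u > 0" "phi v < 0" using at_lo at_rho[OF n] by blast+
        then show "(phi u \<le> 0 \<and> 0 \<le> phi v) \<or> (phi v \<le> 0 \<and> 0 \<le> phi u)" by simp
      qed
      have lh: "lo \<le> \<rho>2" using lo by simp
      show ?thesis by (rule shoot[OF good glip of_nat_0_le_iff A lh sg])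
    qed
  qed
  have seq2: "\<forall>n\<ge>N. \<exists>c u. c \<in> {\<rho>2..R} \<and> sol (gi f R n) c u \<and> phi u = 0"
  proof (intro allI impI)
    fix n assume n: "n \<ge> N"
    show "\<exists>c u. c \<in> {\<rho>2..R} \<and> sol (gi f R n) c u \<and> phi u = 0"
    proof -
      have sg: "\<forall>u v. sol (gi f R n) \<rho>2 u \<longrightarrow> sol (gi f R n) R v \<longrightarrow>
          (phi u \<le> 0 \<and> 0 \<le> phi v) \<or> (phi v \<le> 0 \<and> 0 \<le> phi u)"
      proof (intro allI impI)
        fix u v assume "sol (gi f R n) \<rho>2 u" "sol (gi f R n) R v"
        then have "phi u < 0" "phi v > 0" using at_R at_rho[OF n] by blast+
        then show "(phi u \<le> 0 \<and> 0 \<le> phi v) \<or> (phi v \<le> 0 \<and> 0 \<le> phi u)" by simp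
      qed
      have lh: "\<rho>2 \<le> R" using R1 by simp
      show ?thesis by (rule shoot[OF good glip of_nat_0_le_iff A lh sg])
    qed
  qed
  have ex1: "\<forall>n. \<exists>p. N \<le> n \<longrightarrow> fst p \<in> {lo..\<rho>2} \<and> sol (gi f R n) (fst p) (snd p) \<and> phi (snd p) = 0"
  proof
    fix n show "\<exists>p. N \<le> n \<longrightarrow> fst p \<in> {lo..\<rho>2} \<and> sol (gi f R n) (fst p) (snd p) \<and> phi (snd p) = 0"
    proof (cases "N \<le> n")
      case True
      then obtain c u where "c \<in> {lo..\<rho>2}" "sol (gi f R n) c u" "phi u = 0" using seq1 by blast
      then show ?thesis by (intro exI[of _ "(c, u)"]) simp
    qed simp
  qed
  obtain P1 where P1: "\<forall>n. N \<le> n \<longrightarrow> fst (P1 n) \<in> {lo..\<rho>2} \<and> sol (gi f R n) (fst (P1 n)) (snd (P1 n)) \<and> phi (snd (P1 n)) = 0"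
    using choice[OF ex1] by blast
  have ex2: "\<forall>n. \<exists>p. N \<le> n \<longrightarrow> fst p \<in> {\<rho>2..R} \<and> sol (gi f R n) (fst p) (snd p) \<and> phi (snd p) = 0"
  proof
    fix n show "\<exists>p. N \<le> n \<longrightarrow> fst p \<in> {\<rho>2..R} \<and> sol (gi f R n) (fst p) (snd p) \<and> phi (snd p) = 0"
    proof (cases "N \<le> n")
      case True
      then obtain c u where "c \<in> {\<rho>2..R}" "sol (gi f R n) c u" "phi u = 0" using seq2 by blast
      then show ?thesis by (intro exI[of _ "(c, u)"]) simp
    qed simp
  qed
  obtain P2 where P2: "\<forall>n. N \<le> n \<longrightarrow> fst (P2 n) \<in> {\<rho>2..R} \<and> sol (gi f R n) (fst (P2 n)) (snd (P2 n)) \<and> phi (snd (P2 n)) = 0"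
    using choice[OF ex2] by blast
  have P1': "\<forall>n\<ge>N. fst (P1 n) \<in> {lo..\<rho>2} \<and> sol (gi f R n) (fst (P1 n)) (snd (P1 n)) \<and> phi (snd (P1 n)) = 0"
    using P1 by blast
  have P2': "\<forall>n\<ge>N. fst (P2 n) \<in> {\<rho>2..R} \<and> sol (gi f R n) (fst (P2 n)) (snd (P2 n)) \<and> phi (snd (P2 n)) = 0"
    using P2 by blast
  have l1: "0 \<le> lo" "lo \<le> \<rho>2" "\<rho>2 \<le> R" using lo R1 by auto
  have l2: "0 \<le> \<rho>2" "\<rho>2 \<le> R" "R \<le> R" using rho R1 by auto
  obtain c1 u1 where cu1: "c1 \<in> {lo..\<rho>2}" "sol f c1 u1" "phi u1 = 0"
    using limit_sol[OF f l1 A P1'] by blast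
  obtain c2 u2 where cu2: "c2 \<in> {\<rho>2..R}" "sol f c2 u2" "phi u2 = 0"
    using limit_sol[OF f l2 A P2'] by blast
  have no_rho: "phi u < 0" if "sol f \<rho>2 u" for u
  proof (rule rho_neg[OF that f rho])
    show "M2 * \<rho>2 \<ge> 0"
    proof (rule ccontr)
      assume "\<not> M2 * \<rho>2 \<ge> 0"
      then have "M2 * \<rho>2 * Ia < 0" using Ipos by (simp add: mult_neg_pos)
      moreover have "\<rho>2 * (1 - \<alpha> * \<eta>) > 0" using rho ae by simp
      ultimately show False using MIr by linarith
    qed
    show "\<forall>x\<in>{gam T \<eta> \<alpha> * \<rho>2..\<rho>2}. M2 * \<rho>2 \<le> f x" using cond by blast
    show "M2 * \<rho>2 * Ia > \<rho>2 * (1 - \<alpha> * \<eta>)" by (rule MIr)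
  qed
  have "c1 \<noteq> \<rho>2" using no_rho cu1 by force
  then have c1: "0 < c1" "c1 < \<rho>2" using cu1(1) lo by auto
  have "c2 \<noteq> \<rho>2" using no_rho cu2 by force
  then have c2: "\<rho>2 < c2" using cu2(1) by auto
  show ?thesis using cu1 cu2 c1 c2 by blast
qed

end

theorem theorem4p2:
  fixes T \<eta> \<alpha> \<rho>2 M2 :: real and f a :: "real \<Rightarrow> real"
  assumes "T > 0" and "0 < \<eta>" and "\<eta> < T" and "0 < \<alpha>" and "\<alpha> < 1 / \<eta>"
    and "continuous_on {0..} f" and "\<forall>u\<ge>0. f u \<ge> 0"
    and "continuous_on {0..T} a" and "\<forall>t\<in>{0..T}. a t \<ge> 0"
    and "\<exists>t0\<in>{0..T}. a t0 > 0"
    and "((\<lambda>u. f u / u) \<longlongrightarrow> 0) (at_right 0)"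
    and "((\<lambda>u. f u / u) \<longlongrightarrow> 0) at_top"
    and "\<rho>2 > 0" and "M2 \<ge> Lambda2 T \<eta> \<alpha> a"
    and "\<forall>u\<in>{gam T \<eta> \<alpha> * \<rho>2..\<rho>2}. f u \<ge> M2 * \<rho>2"
  shows "\<exists>u1 u2. pos_solution T \<eta> \<alpha> a f u1 \<and> pos_solution T \<eta> \<alpha> a f u2 \<and>
           0 < supnorm T u1 \<and> supnorm T u1 < \<rho>2 \<and> \<rho>2 < supnorm T u2"
proof -
  have ae: "\<alpha> * \<eta> < 1" using assms(5) assms(2) by (simp add: less_divide_eq)
  interpret P: prob T \<eta> \<alpha> a
    using assms(1-4,8,9) ae by unfold_locales auto
  have fg: "P.goodg f" unfolding P.goodg_def using assms(6,7) by auto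
  have Ipos: "P.Ia > 0" by (rule P.Ia_pos[OF assms(10)])
  have L: "Lambda2 T \<eta> \<alpha> a = (1 - \<alpha> * \<eta>) / (gam T \<eta> \<alpha> * P.Ia)"
    unfolding Lambda2_def P.Ia_def by simp
  have gI: "gam T \<eta> \<alpha> * P.Ia > 0" using P.gam_pos Ipos by simp
  have M2': "M2 * (gam T \<eta> \<alpha> * P.Ia) \<ge> 1 - \<alpha> * \<eta>"
    using assms(14) gI unfolding L by (simp add: pos_divide_le_eq)
  obtain c1 u1 c2 u2 where s: "P.sol f c1 u1" "P.phi u1 = 0" "0 < c1" "c1 < \<rho>2"
    "P.sol f c2 u2" "P.phi u2 = 0" "\<rho>2 < c2"
    using P.two_solutions[OF fg assms(11) assms(12) Ipos assms(13) M2' assms(15)] by blast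
  have c2p: "c2 > 0" using s(7) assms(13) by simp
  have r1: "pos_solution T \<eta> \<alpha> a f u1" "supnorm T u1 = c1" using P.final_props[OF fg s(1,2,3)] by auto
  have r2: "pos_solution T \<eta> \<alpha> a f u2" "supnorm T u2 = c2" using P.final_props[OF fg s(5,6) c2p] by auto
  show ?thesis using r1 r2 s by auto
qed

end
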